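(* Let $(x_0,v_0)\in\mathbb R^3_0\times\mathbb R^3$ lie on a non-degenerate elliptic Keplerian orbit, i.e. $L_0:=L(x_0,v_0)\neq0$ and $A_0:=A(x_0,v_0)$ satisfies $|A_0|<\mu$. For any $c$ with $0<c<\min\{k_1|L_0|^2/2,\ k_2(\mu-|A_0|)^2/2\}$, every trajectory of $$\dot x = v - k_1 v\times\Delta L - k_2\Big(v\times(\Delta A\times v)-\tfrac{\mu}{|x|}\Delta A+\tfrac{\mu}{|x|^3}xx^T\Delta A\Big),$$ $$\dot v = -\mu\tfrac{x}{|x|^3} - k_1\Delta L\times x - k_2\big((x\times v)\times\Delta A + x\times(v\times\Delta A)\big),$$ with $\Delta L=L(x,v)-L_0$, $\Delta A=A(x,v)-A_0$, starting in $V^{-1}([0,c])$ stays in $V^{-1}([0,c])$ for all $t\ge0$ and converges as $t\to\infty$ to $V^{-1}(0)=\{(x,v): L(x,v)=L_0,\ A(x,v)=A_0\}$. Furthermore $V^{-1}(0)$ is invariant under both this system and the Kepler system $\dot x=v$, $\dot v=-\mu x/|x|^3$.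
   Context: $\mathbb R^3_0=\mathbb R^3\setminus\{0\}$, $\mu>0$, $k_1,k_2>0$. $L(x,v)=x\times v$, $A(x,v)=v\times(x\times v)-\mu x/|x|$ (note $L\perp A$ always). $V(x,v)=\tfrac{k_1}{2}|L(x,v)-L_0|^2+\tfrac{k_2}{2}|A(x,v)-A_0|^2$ on $\mathbb R^3_0\times\mathbb R^3$. *)

theory Defs
  imports "HOL-Analysis.Analysis" "HOL-Analysis.Cross3"
begin

type_synonym vec3 = "real ^ 3"

definition angmom :: "vec3 \<Rightarrow> vec3 \<Rightarrow> vec3" where
  "angmom x v = cross3 x v"

definition lrl :: "real \<Rightarrow> vec3 \<Rightarrow> vec3 \<Rightarrow> vec3" where
  "lrl \<mu> x v = cross3 v (cross3 x v) - (\<mu> / norm x) *\<^sub>R x"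

definition lyapV :: "real \<Rightarrow> real \<Rightarrow> real \<Rightarrow> vec3 \<Rightarrow> vec3 \<Rightarrow> vec3 \<Rightarrow> vec3 \<Rightarrow> real" where
  "lyapV \<mu> k1 k2 L0 A0 x v =
     k1 / 2 * (norm (angmom x v - L0))\<^sup>2 + k2 / 2 * (norm (lrl \<mu> x v - A0))\<^sup>2"

text \<open>Right-hand side of the controlled system (x-component and v-component).
  The term x x^T dA is written as (x . dA) x.\<close>
definition ctrl_x :: "real \<Rightarrow> real \<Rightarrow> real \<Rightarrow> vec3 \<Rightarrow> vec3 \<Rightarrow> vec3 \<Rightarrow> vec3 \<Rightarrow> vec3" where
  "ctrl_x \<mu> k1 k2 L0 A0 x v =
     (let dL = angmom x v - L0; dA = lrl \<mu> x v - A0 in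
      v - k1 *\<^sub>R cross3 v dL
        - k2 *\<^sub>R (cross3 v (cross3 dA v) - (\<mu> / norm x) *\<^sub>R dA
                   + (\<mu> / norm x ^ 3) *\<^sub>R ((x \<bullet> dA) *\<^sub>R x)))"

definition ctrl_v :: "real \<Rightarrow> real \<Rightarrow> real \<Rightarrow> vec3 \<Rightarrow> vec3 \<Rightarrow> vec3 \<Rightarrow> vec3 \<Rightarrow> vec3" where
  "ctrl_v \<mu> k1 k2 L0 A0 x v =
     (let dL = angmom x v - L0; dA = lrl \<mu> x v - A0 in
      - (\<mu> / norm x ^ 3) *\<^sub>R x - k1 *\<^sub>R cross3 dL x
        - k2 *\<^sub>R (cross3 (cross3 x v) dA + cross3 x (cross3 v dA)))"

definition ctrl_sol :: "real \<Rightarrow> real \<Rightarrow> real \<Rightarrow> vec3 \<Rightarrow> vec3 \<Rightarrow> real set \<Rightarrow> (real \<Rightarrow> vec3) \<Rightarrow> (real \<Rightarrow> vec3) \<Rightarrow> bool" where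
  "ctrl_sol \<mu> k1 k2 L0 A0 I x v \<longleftrightarrow>
     (\<forall>t\<in>I. x t \<noteq> 0
        \<and> (x has_vector_derivative ctrl_x \<mu> k1 k2 L0 A0 (x t) (v t)) (at t within I)
        \<and> (v has_vector_derivative ctrl_v \<mu> k1 k2 L0 A0 (x t) (v t)) (at t within I))"

definition kepler_sol :: "real \<Rightarrow> real set \<Rightarrow> (real \<Rightarrow> vec3) \<Rightarrow> (real \<Rightarrow> vec3) \<Rightarrow> bool" where
  "kepler_sol \<mu> I x v \<longleftrightarrow>
     (\<forall>t\<in>I. x t \<noteq> 0
        \<and> (x has_vector_derivative v t) (at t within I)
        \<and> (v has_vector_derivative (- (\<mu> / norm (x t) ^ 3) *\<^sub>R x t)) (at t within I))"

definition target_set :: "real \<Rightarrow> vec3 \<Rightarrow> vec3 \<Rightarrow> (vec3 \<times> vec3) set" where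
  "target_set \<mu> L0 A0 = {(x, v). x \<noteq> 0 \<and> angmom x v = L0 \<and> lrl \<mu> x v = A0}"

end

theory Submission
  imports Defs "HOL-Analysis.Analysis"
begin


definition gx :: "real \<Rightarrow> real \<Rightarrow> real \<Rightarrow> vec3 \<Rightarrow> vec3 \<Rightarrow> vec3 \<Rightarrow> vec3 \<Rightarrow> vec3" where
  "gx \<mu> k1 k2 L0 A0 x v =
     (let dL = angmom x v - L0; dA = lrl \<mu> x v - A0 in
      k1 *\<^sub>R cross3 v dL
        + k2 *\<^sub>R (cross3 v (cross3 dA v) - (\<mu> / norm x) *\<^sub>R dA
                   + (\<mu> / norm x ^ 3) *\<^sub>R ((x \<bullet> dA) *\<^sub>R x)))"

definition gv :: "real \<Rightarrow> real \<Rightarrow> real \<Rightarrow> vec3 \<Rightarrow> vec3 \<Rightarrow> vec3 \<Rightarrow> vec3 \<Rightarrow> vec3" where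
  "gv \<mu> k1 k2 L0 A0 x v =
     (let dL = angmom x v - L0; dA = lrl \<mu> x v - A0 in
      k1 *\<^sub>R cross3 dL x + k2 *\<^sub>R (cross3 (cross3 x v) dA + cross3 x (cross3 v dA)))"

lemma ctrl_x_eq: "ctrl_x \<mu> k1 k2 L0 A0 x v = v - gx \<mu> k1 k2 L0 A0 x v"
  by (simp add: ctrl_x_def gx_def Let_def algebra_simps)

lemma ctrl_v_eq: "ctrl_v \<mu> k1 k2 L0 A0 x v = - (\<mu> / norm x ^ 3) *\<^sub>R x - gv \<mu> k1 k2 L0 A0 x v"
  by (simp add: ctrl_v_def gv_def Let_def algebra_simps)

definition dAd :: "real \<Rightarrow> vec3 \<Rightarrow> vec3 \<Rightarrow> vec3 \<Rightarrow> vec3 \<Rightarrow> vec3" where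
  "dAd \<mu> x v hx hv = cross3 hv (cross3 x v) + cross3 v (cross3 hx v + cross3 x hv)
      - ((\<mu> / norm x) *\<^sub>R hx - (\<mu> * (x \<bullet> hx) / norm x ^ 3) *\<^sub>R x)"

definition DV :: "real \<Rightarrow> real \<Rightarrow> real \<Rightarrow> vec3 \<Rightarrow> vec3 \<Rightarrow> vec3 \<Rightarrow> vec3 \<Rightarrow> vec3 \<Rightarrow> vec3 \<Rightarrow> real" where
  "DV \<mu> k1 k2 L0 A0 x v hx hv =
     k1 * ((angmom x v - L0) \<bullet> (cross3 hx v + cross3 x hv))
   + k2 * ((lrl \<mu> x v - A0) \<bullet> dAd \<mu> x v hx hv)"

lemma triple1: "a \<bullet> cross3 b c = b \<bullet> cross3 c a" 
  by (simp add: cross3_simps)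

lemma tr1: "d \<bullet> cross3 h v = h \<bullet> cross3 v d" by (simp add: cross3_simps)
lemma tr2: "d \<bullet> cross3 x h = h \<bullet> cross3 d x" by (simp add: cross3_simps)
lemma tr3: "d \<bullet> cross3 v (cross3 h v) = h \<bullet> cross3 v (cross3 d v)" by (simp add: cross3_simps)
lemma tr4: "d \<bullet> cross3 v (cross3 x h) = h \<bullet> cross3 x (cross3 v d)" by (simp add: cross3_simps)

lemma DV_grad: "DV \<mu> k1 k2 L0 A0 x v hx hv = gx \<mu> k1 k2 L0 A0 x v \<bullet> hx + gv \<mu> k1 k2 L0 A0 x v \<bullet> hv"
proof -
  define dL where "dL = angmom x v - L0"
  define dA where "dA = lrl \<mu> x v - A0"
  have "DV \<mu> k1 k2 L0 A0 x v hx hv = k1 * (hx \<bullet> cross3 v dL + hv \<bullet> cross3 dL x)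
     + k2 * (hv \<bullet> cross3 (cross3 x v) dA + hx \<bullet> cross3 v (cross3 dA v) + hv \<bullet> cross3 x (cross3 v dA)
       - ((\<mu> / norm x) * (hx \<bullet> dA) - (\<mu> * (x \<bullet> hx) / norm x ^ 3) * (x \<bullet> dA)))"
    unfolding DV_def dAd_def dL_def[symmetric] dA_def[symmetric]
    by (simp add: inner_add_right inner_diff_right tr1 tr2 tr3 tr4 inner_commute cross_add_right cross_add_left)
  also have "\<dots> = gx \<mu> k1 k2 L0 A0 x v \<bullet> hx + gv \<mu> k1 k2 L0 A0 x v \<bullet> hv"
    unfolding gx_def gv_def Let_def dL_def[symmetric] dA_def[symmetric]
    by (simp add: inner_add_left inner_diff_left algebra_simps inner_commute)
  finally show ?thesis .
qed


lemma bb_cross: "bounded_bilinear cross3"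
  using bilinear_conv_bounded_bilinear bilinear_cross by blast

lemma hvd_cross:
  assumes "(f has_vector_derivative f') (at t within I)" "(g has_vector_derivative g') (at t within I)"
  shows "((\<lambda>s. cross3 (f s) (g s)) has_vector_derivative (cross3 (f t) g' + cross3 f' (g t))) (at t within I)"
  using bounded_bilinear.has_vector_derivative[OF bb_cross assms] .

lemma hvd_inner:
  assumes "(f has_vector_derivative f') (at t within I)" "(g has_vector_derivative g') (at t within I)"
  shows "((\<lambda>s. inner (f s) (g s)) has_real_derivative (inner (f t) g' + inner f' (g t))) (at t within I)"
  using bounded_bilinear.has_vector_derivative[OF bounded_bilinear_inner assms]
  by (simp add: has_real_derivative_iff_has_vector_derivative)

lemma hvd_norm:
  fixes f :: "real \<Rightarrow> 'a::real_inner"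
  assumes "(f has_vector_derivative f') (at t within I)" "f t \<noteq> 0"
  shows "((\<lambda>s. norm (f s)) has_real_derivative (inner (f t) f' / norm (f t))) (at t within I)"
proof -
  have "((\<lambda>s. norm (f s)) has_derivative (\<lambda>h. (h *\<^sub>R f') \<bullet> sgn (f t))) (at t within I)"
    using has_derivative_compose[OF assms(1)[unfolded has_vector_derivative_def] has_derivative_norm[OF assms(2)]]
    by (simp add: o_def)
  then show ?thesis
    unfolding has_real_derivative_iff_has_vector_derivative has_vector_derivative_def
    by (simp add: sgn_div_norm inner_commute mult.commute divide_inverse mult.left_commute)
qed

lemma hvd_angmom:
  assumes "(x has_vector_derivative x') (at t within I)" "(v has_vector_derivative v') (at t within I)"
  shows "((\<lambda>s. angmom (x s) (v s)) has_vector_derivative (cross3 x' (v t) + cross3 (x t) v')) (at t within I)"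
  unfolding angmom_def using hvd_cross[OF assms] by (simp add: add.commute)

lemma hvd_lrl:
  assumes "(x has_vector_derivative x') (at t within I)" "(v has_vector_derivative v') (at t within I)"
    and "x t \<noteq> 0"
  shows "((\<lambda>s. lrl \<mu> (x s) (v s)) has_vector_derivative dAd \<mu> (x t) (v t) x' v') (at t within I)"
proof -
  have n: "((\<lambda>s. norm (x s)) has_real_derivative (inner (x t) x' / norm (x t))) (at t within I)"
    by (rule hvd_norm[OF assms(1,3)])
  have nz: "norm (x t) \<noteq> 0" using assms(3) by simp
  have m: "((\<lambda>s. \<mu> / norm (x s)) has_real_derivative (- \<mu> * (inner (x t) x') / norm (x t) ^ 3)) (at t within I)"
    using DERIV_cdivide[OF DERIV_inverse_fun[OF n nz], of "1/\<mu>"] nz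
    by (auto simp: divide_simps power2_eq_square power3_eq_cube elim!: DERIV_cong)
  have c: "((\<lambda>s. cross3 (v s) (cross3 (x s) (v s))) has_vector_derivative
     (cross3 (v t) (cross3 (x t) v' + cross3 x' (v t)) + cross3 v' (cross3 (x t) (v t)))) (at t within I)"
    by (intro hvd_cross assms)
  have s: "((\<lambda>s. (\<mu> / norm (x s)) *\<^sub>R x s) has_vector_derivative
      ((\<mu> / norm (x t)) *\<^sub>R x' + (- \<mu> * (inner (x t) x') / norm (x t) ^ 3) *\<^sub>R x t)) (at t within I)"
    by (rule has_vector_derivative_scaleR[OF m assms(1)])
  show ?thesis
    unfolding lrl_def
    apply (rule has_vector_derivative_eq_rhs[OF has_vector_derivative_diff[OF c s]])
    by (simp add: dAd_def algebra_simps)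
qed

lemma hvd_sqnorm:
  fixes f :: "real \<Rightarrow> 'a::real_inner"
  assumes "(f has_vector_derivative f') (at t within I)"
  shows "((\<lambda>s. (norm (f s))\<^sup>2) has_real_derivative (2 * inner (f t) f')) (at t within I)"
  using hvd_inner[OF assms assms] by (simp add: power2_norm_eq_inner inner_commute)

lemma hvd_V:
  assumes "(x has_vector_derivative x') (at t within I)" "(v has_vector_derivative v') (at t within I)"
    and "x t \<noteq> 0"
  shows "((\<lambda>s. lyapV \<mu> k1 k2 L0 A0 (x s) (v s)) has_real_derivative DV \<mu> k1 k2 L0 A0 (x t) (v t) x' v') (at t within I)"
proof -
  have a: "((\<lambda>s. angmom (x s) (v s) - L0) has_vector_derivative (cross3 x' (v t) + cross3 (x t) v')) (at t within I)"
    using hvd_angmom[OF assms(1,2)] by (simp add: has_vector_derivative_diff_const)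
  have b: "((\<lambda>s. lrl \<mu> (x s) (v s) - A0) has_vector_derivative dAd \<mu> (x t) (v t) x' v') (at t within I)"
    using hvd_lrl[OF assms] by (simp add: has_vector_derivative_diff_const)
  show ?thesis
    unfolding lyapV_def
    apply (rule DERIV_cong)
     apply (rule DERIV_add[OF DERIV_cmult[OF hvd_sqnorm[OF a]] DERIV_cmult[OF hvd_sqnorm[OF b]]])
    by (simp add: DV_def)
qed

lemma kepler_dL: "cross3 v v + cross3 x (c *\<^sub>R x) = 0"
  by (simp add: cross_mult_right)

lemma kepler_dA:
  assumes "x \<noteq> 0"
  shows "dAd \<mu> x v v (- (\<mu> / norm x ^ 3) *\<^sub>R x) = 0"
proof -
  have xx: "x \<bullet> x = (norm x)\<^sup>2" by (simp add: power2_norm_eq_inner)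
  have nz: "norm x \<noteq> 0" using assms by simp
  have l: "cross3 x (cross3 x v) = (x \<bullet> v) *\<^sub>R x - (norm x)\<^sup>2 *\<^sub>R v"
    using Lagrange[of x x v] xx by simp
  have "dAd \<mu> x v v (- (\<mu> / norm x ^ 3) *\<^sub>R x) =
      (- (\<mu> / norm x ^ 3)) *\<^sub>R cross3 x (cross3 x v) - ((\<mu> / norm x) *\<^sub>R v - (\<mu> * (x \<bullet> v) / norm x ^ 3) *\<^sub>R x)"
    unfolding dAd_def by (simp add: cross_mult_left cross_mult_right cross_skew[of x "cross3 x v"])
  also have "\<dots> = 0"
    unfolding l using nz by (simp add: algebra_simps divide_simps power2_eq_square power3_eq_cube)
  finally show ?thesis .
qed

lemma DV_kepler: "x \<noteq> 0 \<Longrightarrow> DV \<mu> k1 k2 L0 A0 x v v (- (\<mu> / norm x ^ 3) *\<^sub>R x) = 0"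
  unfolding DV_def using kepler_dA[of x \<mu> v] kepler_dL[of v x] by simp

definition G :: "real \<Rightarrow> real \<Rightarrow> real \<Rightarrow> vec3 \<Rightarrow> vec3 \<Rightarrow> vec3 \<Rightarrow> vec3 \<Rightarrow> real" where
  "G \<mu> k1 k2 L0 A0 x v = (norm (gx \<mu> k1 k2 L0 A0 x v))\<^sup>2 + (norm (gv \<mu> k1 k2 L0 A0 x v))\<^sup>2"

lemma DV_ctrl: "x \<noteq> 0 \<Longrightarrow> DV \<mu> k1 k2 L0 A0 x v (ctrl_x \<mu> k1 k2 L0 A0 x v) (ctrl_v \<mu> k1 k2 L0 A0 x v) = - G \<mu> k1 k2 L0 A0 x v"
proof -
  assume x: "x \<noteq> 0"
  have "DV \<mu> k1 k2 L0 A0 x v (ctrl_x \<mu> k1 k2 L0 A0 x v) (ctrl_v \<mu> k1 k2 L0 A0 x v)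
     = DV \<mu> k1 k2 L0 A0 x v v (- (\<mu> / norm x ^ 3) *\<^sub>R x) - (gx \<mu> k1 k2 L0 A0 x v \<bullet> gx \<mu> k1 k2 L0 A0 x v + gv \<mu> k1 k2 L0 A0 x v \<bullet> gv \<mu> k1 k2 L0 A0 x v)"
    unfolding DV_grad ctrl_x_eq ctrl_v_eq by (simp add: inner_diff_right)
  then show ?thesis using DV_kepler[OF x] by (simp add: G_def power2_norm_eq_inner)
qed

lemma G_nonneg: "G \<mu> k1 k2 L0 A0 x v \<ge> 0" by (simp add: G_def)


lemma interval_Icc_sub: "is_interval I \<Longrightarrow> a \<in> I \<Longrightarrow> b \<in> I \<Longrightarrow> {a..b} \<subseteq> I"
  for I :: "real set"
  unfolding is_interval_1 by (meson atLeastAtMost_iff subsetI)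

lemma decr_on_interval:
  fixes g :: "real \<Rightarrow> real"
  assumes I: "is_interval I" and d: "\<And>t. t \<in> I \<Longrightarrow> (g has_real_derivative g' t) (at t within I)"
    and n: "\<And>t. t \<in> I \<Longrightarrow> g' t \<le> 0" and ab: "a \<in> I" "b \<in> I" "a \<le> b"
  shows "g b \<le> g a"
proof -
  have sub: "{a..b} \<subseteq> I" using interval_Icc_sub[OF I ab(1,2)] .
  have "\<And>x. a \<le> x \<Longrightarrow> x \<le> b \<Longrightarrow> (g has_derivative (\<lambda>h. g' x * h)) (at x within {a..b})"
  proof -
    fix x assume "a \<le> x" "x \<le> b"
    then have "x \<in> I" using sub by auto
    from has_field_derivative_subset[OF d[OF this] sub]
    show "(g has_derivative (\<lambda>h. g' x * h)) (at x within {a..b})"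
      by (simp add: has_field_derivative_def)
  qed
  from mvt_very_simple[OF ab(3) this] obtain x where x: "x \<in> {a..b}" "g b - g a = g' x * (b - a)"
    by blast
  have xI: "x \<in> I" using x(1) sub by auto
  have "g' x * (b - a) \<le> 0" using n[OF xI] ab(3) by (auto intro: mult_nonpos_nonneg)
  then show ?thesis using x(2) by simp
qed

lemma const_on_interval:
  fixes g :: "real \<Rightarrow> 'b::real_normed_vector"
  assumes I: "is_interval I" and d: "\<And>t. t \<in> I \<Longrightarrow> (g has_vector_derivative 0) (at t within I)"
    and ab: "a \<in> I" "b \<in> I"
  shows "g b = g a"
proof -
  have "\<exists>c. \<forall>x\<in>I. g x = c"
    apply (rule has_derivative_zero_constant)
    using I is_interval_convex apply blast
    using d unfolding has_vector_derivative_def by simp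
  then show ?thesis using ab by auto
qed

lemma ctrl_V_deriv:
  assumes "ctrl_sol \<mu> k1 k2 L0 A0 I x v" "t \<in> I"
  shows "((\<lambda>s. lyapV \<mu> k1 k2 L0 A0 (x s) (v s)) has_real_derivative (- G \<mu> k1 k2 L0 A0 (x t) (v t))) (at t within I)"
proof -
  from assms have h: "x t \<noteq> 0" "(x has_vector_derivative ctrl_x \<mu> k1 k2 L0 A0 (x t) (v t)) (at t within I)"
    "(v has_vector_derivative ctrl_v \<mu> k1 k2 L0 A0 (x t) (v t)) (at t within I)"
    unfolding ctrl_sol_def by auto
  show ?thesis using hvd_V[OF h(2,3,1), of \<mu> k1 k2 L0 A0] DV_ctrl[OF h(1), of \<mu> k1 k2 L0 A0 "v t"] by simp
qed

lemma ctrl_V_decr: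
  assumes "is_interval I" "ctrl_sol \<mu> k1 k2 L0 A0 I x v" "s \<in> I" "t \<in> I" "s \<le> t"
  shows "lyapV \<mu> k1 k2 L0 A0 (x t) (v t) \<le> lyapV \<mu> k1 k2 L0 A0 (x s) (v s)"
proof -
  have n: "\<And>t. t \<in> I \<Longrightarrow> - G \<mu> k1 k2 L0 A0 (x t) (v t) \<le> 0"
    using G_nonneg by (metis neg_le_0_iff_le)
  show ?thesis
    by (rule decr_on_interval[OF assms(1) ctrl_V_deriv[OF assms(2)] n assms(3-5)])
qed

lemma lyapV_nonneg: "k1 \<ge> 0 \<Longrightarrow> k2 \<ge> 0 \<Longrightarrow> lyapV \<mu> k1 k2 L0 A0 x v \<ge> 0"
  by (simp add: lyapV_def)

lemma lyapV_zero_iff: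
  "k1 > 0 \<Longrightarrow> k2 > 0 \<Longrightarrow> lyapV \<mu> k1 k2 L0 A0 x v = 0 \<longleftrightarrow> angmom x v = L0 \<and> lrl \<mu> x v = A0"
proof -
  assume k: "k1 > 0" "k2 > 0"
  have a: "k1 / 2 * (norm (angmom x v - L0))\<^sup>2 \<ge> 0" "k2 / 2 * (norm (lrl \<mu> x v - A0))\<^sup>2 \<ge> 0"
    using k by auto
  have "lyapV \<mu> k1 k2 L0 A0 x v = 0 \<longleftrightarrow> k1 / 2 * (norm (angmom x v - L0))\<^sup>2 = 0 \<and> k2 / 2 * (norm (lrl \<mu> x v - A0))\<^sup>2 = 0"
    unfolding lyapV_def using a by linarith
  also have "\<dots> \<longleftrightarrow> angmom x v = L0 \<and> lrl \<mu> x v = A0" using k by simp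
  finally show ?thesis .
qed

lemma part3:
  assumes k: "k1 > 0" "k2 > 0" and I: "is_interval I" "0 \<in> I" "I \<subseteq> {0..}"
    and sol: "ctrl_sol \<mu> k1 k2 L0 A0 I x v" and tg: "(x 0, v 0) \<in> target_set \<mu> L0 A0" and t: "t \<in> I"
  shows "(x t, v t) \<in> target_set \<mu> L0 A0"
proof -
  have "lyapV \<mu> k1 k2 L0 A0 (x 0) (v 0) = 0" using tg k by (simp add: target_set_def lyapV_zero_iff)
  moreover have "lyapV \<mu> k1 k2 L0 A0 (x t) (v t) \<le> lyapV \<mu> k1 k2 L0 A0 (x 0) (v 0)"
    using ctrl_V_decr[OF I(1) sol I(2) t] t I(3) by auto
  moreover have "lyapV \<mu> k1 k2 L0 A0 (x t) (v t) \<ge> 0" using k by (simp add: lyapV_nonneg)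
  ultimately have "lyapV \<mu> k1 k2 L0 A0 (x t) (v t) = 0" by simp
  moreover have "x t \<noteq> 0" using sol t by (simp add: ctrl_sol_def)
  ultimately show ?thesis using k by (simp add: target_set_def lyapV_zero_iff)
qed

lemma part4:
  assumes I: "is_interval I" "0 \<in> I"
    and sol: "kepler_sol \<mu> I x v" and tg: "(x 0, v 0) \<in> target_set \<mu> L0 A0" and t: "t \<in> I"
  shows "(x t, v t) \<in> target_set \<mu> L0 A0"
proof -
  have d: "\<And>s. s \<in> I \<Longrightarrow> x s \<noteq> 0 \<and> (x has_vector_derivative v s) (at s within I) \<and>
      (v has_vector_derivative (- (\<mu> / norm (x s) ^ 3) *\<^sub>R x s)) (at s within I)"
    using sol unfolding kepler_sol_def by blast
  have da: "\<And>s. s \<in> I \<Longrightarrow> ((\<lambda>s. angmom (x s) (v s)) has_vector_derivative 0) (at s within I)"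
    subgoal for s using hvd_angmom[of x "v s" s I v "- (\<mu> / norm (x s) ^ 3) *\<^sub>R x s"] d[of s]
      kepler_dL[of "v s" "x s" "- (\<mu> / norm (x s) ^ 3)"] by simp
    done
  have db: "\<And>s. s \<in> I \<Longrightarrow> ((\<lambda>s. lrl \<mu> (x s) (v s)) has_vector_derivative 0) (at s within I)"
    subgoal for s using hvd_lrl[of x "v s" s I v "- (\<mu> / norm (x s) ^ 3) *\<^sub>R x s" \<mu>] d[of s]
      kepler_dA[of "x s" \<mu> "v s"] by simp
    done
  have "angmom (x t) (v t) = angmom (x 0) (v 0)"
    using const_on_interval[OF I(1) da t I(2)] by simp
  moreover have "lrl \<mu> (x t) (v t) = lrl \<mu> (x 0) (v 0)"
    using const_on_interval[OF I(1) db t I(2)] by simp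
  ultimately show ?thesis using tg d[OF t] by (simp add: target_set_def)
qed


lemma xx_norm: "x \<bullet> x = (norm x)\<^sup>2" by (simp add: power2_norm_eq_inner)

lemma dL_scale: "cross3 (2 *\<^sub>R x) v + cross3 x (- v) = cross3 x v"
proof -
  have "cross3 (2 *\<^sub>R x) v = cross3 (x + x) v" by (simp only: scaleR_2)
  also have "\<dots> = cross3 x v + cross3 x v" by (rule cross_add_left)
  finally have "cross3 (2 *\<^sub>R x) v = cross3 x v + cross3 x v" .
  then show ?thesis by simp
qed

lemma dAd_scale: "x \<noteq> 0 \<Longrightarrow> dAd \<mu> x v (2 *\<^sub>R x) (- v) = 0"
proof -
  assume x: "x \<noteq> 0"
  have n: "norm x \<noteq> 0" using x by simp
  have "(\<mu> * (x \<bullet> (2 *\<^sub>R x)) / norm x ^ 3) = 2 * (\<mu> / norm x)"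
    using n by (simp add: xx_norm power2_eq_square power3_eq_cube divide_simps)
  then show ?thesis unfolding dAd_def dL_scale
    by (simp add: cross_skew[of v])
qed


lemma dAd_x: "x \<noteq> 0 \<Longrightarrow> dAd \<mu> x v x 0 = cross3 v (cross3 x v)"
proof -
  assume x: "x \<noteq> 0"
  have n: "norm x \<noteq> 0" using x by simp
  have "(\<mu> * (x \<bullet> x) / norm x ^ 3) = \<mu> / norm x"
    using n by (simp add: xx_norm power2_eq_square power3_eq_cube divide_simps)
  then show ?thesis unfolding dAd_def by simp
qed

lemma dAd_v: "dAd \<mu> x v 0 x = cross3 x (cross3 x v)"
  unfolding dAd_def by simp

lemma rot_id: "cross3 (cross3 w v) L + cross3 v (cross3 w L) = cross3 w (cross3 v L)"
  by (simp add: cross3_simps)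

lemma rot_id2: "cross3 (cross3 w x) v + cross3 x (cross3 w v) = cross3 w (cross3 x v)"
  by (simp add: cross3_simps)

lemma dAd_rot: "dAd \<mu> x v (cross3 w x) (cross3 w v) = cross3 w (lrl \<mu> x v)"
proof -
  have "x \<bullet> cross3 w x = 0" by (simp add: dot_cross_self)
  then show ?thesis unfolding dAd_def lrl_def
    by (simp add: rot_id2 rot_id cross_mult_right Cross3.right_diff_distrib)
qed

lemma perp_three_zero:
  fixes P L a b :: vec3
  assumes "P \<bullet> L = 0" "P \<bullet> a = 0" "P \<bullet> b = 0" "cross3 a b = c *\<^sub>R L" "c \<noteq> 0" "L \<noteq> 0"
  shows "P = 0"
proof -
  have "cross3 P (cross3 a b) = (P \<bullet> b) *\<^sub>R a - (P \<bullet> a) *\<^sub>R b" by (rule Lagrange)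
  then have "c *\<^sub>R cross3 P L = 0" using assms(2,3,4) by (simp add: cross_mult_right)
  then have "cross3 L P = cross3 L 0" using assms(5) by (simp add: cross_skew[of P])
  moreover have "L \<bullet> P = L \<bullet> 0" using assms(1) by (simp add: inner_commute)
  ultimately show ?thesis using cross_dot_cancel[OF _ _ assms(6)] by metis
qed

lemma cross_cross_common: "cross3 (cross3 a c) (cross3 b c) = (a \<bullet> cross3 b c) *\<^sub>R c"
  using exhaust_3 by (force simp add: cross3_simps)

lemma angmom_lrl_perp: "angmom x v \<bullet> lrl \<mu> x v = 0"
  unfolding angmom_def lrl_def by (simp add: inner_diff_right dot_cross_self inner_commute)

lemma G_zero:
  assumes k: "k1 > 0" "k2 > 0" and x: "x \<noteq> 0" and L: "angmom x v \<noteq> 0"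
    and perp: "L0 \<bullet> A0 = 0" and g: "G \<mu> k1 k2 L0 A0 x v = 0"
  shows "angmom x v = L0 \<and> lrl \<mu> x v = A0"
proof -
  define LL where "LL = angmom x v"
  define A where "A = lrl \<mu> x v"
  define dL where "dL = LL - L0"
  define dA where "dA = A - A0"
  have gx0: "gx \<mu> k1 k2 L0 A0 x v = 0" and gv0: "gv \<mu> k1 k2 L0 A0 x v = 0"
    using g unfolding G_def by (simp_all add: add_nonneg_eq_0_iff)
  have DV0: "\<And>hx hv. DV \<mu> k1 k2 L0 A0 x v hx hv = 0" using gx0 gv0 by (simp add: DV_grad)
  have DVe: "\<And>hx hv. DV \<mu> k1 k2 L0 A0 x v hx hv = k1 * (dL \<bullet> (cross3 hx v + cross3 x hv)) + k2 * (dA \<bullet> dAd \<mu> x v hx hv)"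
    by (simp add: DV_def dL_def dA_def LL_def A_def)
  have LLc: "LL = cross3 x v" by (simp add: LL_def angmom_def)
  have Ac: "cross3 v LL = A + (\<mu> / norm x) *\<^sub>R x" by (simp add: A_def lrl_def LLc)
  have i: "dL \<bullet> LL = 0"
    using DV0[of "2 *\<^sub>R x" "- v"] DVe[of "2 *\<^sub>R x" "- v"] dAd_scale[OF x, of \<mu> v] dL_scale[of x v] k
    by (simp add: LLc)
  have ii: "dA \<bullet> cross3 v LL = 0"
    using DV0[of x 0] DVe[of x 0] dAd_x[OF x, of \<mu> v] k i
    by (simp add: LLc)
  have iii: "dA \<bullet> cross3 x LL = 0"
    using DV0[of 0 x] DVe[of 0 x] dAd_v[of \<mu> x v] k
    by (simp add: LLc)
  have iv0: "\<And>w. k1 * (dL \<bullet> cross3 w LL) + k2 * (dA \<bullet> cross3 w A) = 0"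
  proof -
    fix w
    have "cross3 (cross3 w x) v + cross3 x (cross3 w v) = cross3 w LL" by (simp add: rot_id2 LLc)
    then show "k1 * (dL \<bullet> cross3 w LL) + k2 * (dA \<bullet> cross3 w A) = 0"
      using DV0[of "cross3 w x" "cross3 w v"] DVe[of "cross3 w x" "cross3 w v"] dAd_rot[of \<mu> x v w]
      by (simp add: A_def)
  qed
  define W where "W = k1 *\<^sub>R cross3 LL dL + k2 *\<^sub>R cross3 A dA"
  have "\<And>w. w \<bullet> W = 0"
  proof -
    fix w
    have "w \<bullet> W = k1 * (dL \<bullet> cross3 w LL) + k2 * (dA \<bullet> cross3 w A)"
      unfolding W_def using triple1[of w LL dL] triple1[of LL dL w] triple1[of w A dA] triple1[of A dA w] by (simp add: inner_add_right)
    then show "w \<bullet> W = 0" using iv0 by simp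
  qed
  then have W0: "W = 0" using inner_eq_zero_iff by blast
  have LA: "LL \<bullet> A = 0" using angmom_lrl_perp by (simp add: LL_def A_def)
  have LLn: "LL \<bullet> LL \<noteq> 0" using L by (simp add: LL_def)
  define \<alpha> where "\<alpha> = (dA \<bullet> LL) / (LL \<bullet> LL)"
  define P where "P = dA - \<alpha> *\<^sub>R LL"
  have "cross3 (cross3 v LL) (cross3 x LL) = (v \<bullet> cross3 x LL) *\<^sub>R LL" by (rule cross_cross_common)
  moreover have "v \<bullet> cross3 x LL = - (LL \<bullet> LL)"
  proof -
    have "v \<bullet> cross3 x LL = LL \<bullet> cross3 v x" using triple1[of v x LL] triple1[of x LL v] by simp
    also have "cross3 v x = - LL" using cross_skew[of v x] by (simp add: LLc)
    finally show ?thesis by simp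
  qed
  ultimately have cc: "cross3 (cross3 v LL) (cross3 x LL) = (- (LL \<bullet> LL)) *\<^sub>R LL" by simp
  have P0: "P = 0"
  proof (rule perp_three_zero[OF _ _ _ cc])
    show "P \<bullet> LL = 0" unfolding P_def \<alpha>_def using LLn by (simp add: inner_diff_left)
    show "P \<bullet> cross3 v LL = 0" unfolding P_def using ii by (simp add: inner_diff_left dot_cross_self)
    show "P \<bullet> cross3 x LL = 0" unfolding P_def using iii by (simp add: inner_diff_left dot_cross_self)
    show "- (LL \<bullet> LL) \<noteq> 0" using LLn by simp
    show "LL \<noteq> 0" using L by (simp add: LL_def)
  qed
  have dAa: "dA = \<alpha> *\<^sub>R LL" using P0 by (simp add: P_def)
  define u where "u = L0 - LL"
  have uL: "u \<bullet> LL = 0" using i k by (simp add: u_def dL_def inner_diff_left inner_diff_right inner_commute)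
  have "k1 *\<^sub>R cross3 LL (- u) + k2 *\<^sub>R cross3 A (\<alpha> *\<^sub>R LL) = 0"
    using W0 unfolding W_def dAa by (simp add: u_def dL_def)
  moreover have "cross3 LL (- u) = - cross3 LL u" by simp
  moreover have "cross3 A (\<alpha> *\<^sub>R LL) = - (\<alpha> *\<^sub>R cross3 LL A)"
    using cross_skew[of A LL] by (simp add: cross_mult_right)
  ultimately have "- (k1 *\<^sub>R cross3 LL u + (k2 * \<alpha>) *\<^sub>R cross3 LL A) = 0"
    by (simp add: algebra_simps)
  then have "k1 *\<^sub>R cross3 LL u + (k2 * \<alpha>) *\<^sub>R cross3 LL A = 0"
    by (simp only: neg_equal_0_iff_equal)
  then have "cross3 LL (k1 *\<^sub>R u + (k2 * \<alpha>) *\<^sub>R A) = cross3 LL 0"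
    by (simp only: cross_add_right cross_mult_right cross_zero_right)
  moreover have "LL \<bullet> (k1 *\<^sub>R u + (k2 * \<alpha>) *\<^sub>R A) = LL \<bullet> 0"
    using uL LA by (simp add: inner_add_right inner_commute)
  ultimately have ku: "k1 *\<^sub>R u + (k2 * \<alpha>) *\<^sub>R A = 0"
    using cross_dot_cancel L by (metis LL_def)
  have "L0 \<bullet> A0 = (LL + u) \<bullet> (A - \<alpha> *\<^sub>R LL)"
    by (simp add: u_def dA_def dAa[symmetric])
  also have "\<dots> = - \<alpha> * (LL \<bullet> LL) + u \<bullet> A"
    using LA uL by (simp add: inner_add_left inner_add_right inner_diff_right inner_commute)
  finally have e1: "- \<alpha> * (LL \<bullet> LL) + u \<bullet> A = 0" using perp by simp
  have "k1 * (u \<bullet> A) = - (k2 * \<alpha>) * (A \<bullet> A)"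
  proof -
    have "(k1 *\<^sub>R u + (k2 * \<alpha>) *\<^sub>R A) \<bullet> A = 0" using ku by simp
    then show ?thesis by (simp add: inner_add_left algebra_simps)
  qed
  then have "k1 * (\<alpha> * (LL \<bullet> LL)) + k2 * \<alpha> * (A \<bullet> A) = 0" using e1
    by (metis add.commute add_uminus_conv_diff mult.assoc mult_minus_left right_minus_eq)
  then have "\<alpha> * (k1 * (LL \<bullet> LL) + k2 * (A \<bullet> A)) = 0" by (simp add: algebra_simps)
  moreover have "k1 * (LL \<bullet> LL) + k2 * (A \<bullet> A) > 0"
    using k LLn by (simp add: add_pos_nonneg)
  ultimately have a0: "\<alpha> = 0" by simp
  then have "u = 0" using ku k by simp
  then show ?thesis using dAa a0 by (simp add: u_def dA_def LL_def A_def)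
qed


lemma lrl_dot_x: "x \<noteq> 0 \<Longrightarrow> lrl \<mu> x v \<bullet> x = (norm (angmom x v))\<^sup>2 - \<mu> * norm x"
proof -
  assume x: "x \<noteq> 0"
  have "x \<bullet> cross3 v (cross3 x v) = cross3 x v \<bullet> cross3 x v"
    using triple1[of x v "cross3 x v"] triple1[of v "cross3 x v" x] by simp
  moreover have "(\<mu> / norm x) * (x \<bullet> x) = \<mu> * norm x" using x by (simp add: xx_norm power2_eq_square)
  ultimately show ?thesis unfolding lrl_def angmom_def
    by (simp add: inner_diff_left inner_diff_right inner_commute power2_norm_eq_inner)
qed

lemma norm_v_L: "norm (cross3 v (angmom x v)) = norm v * norm (angmom x v)"
proof -
  have "v \<bullet> angmom x v = 0" by (simp add: angmom_def dot_cross_self)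
  then have "(norm (cross3 v (angmom x v)))\<^sup>2 = (norm v * norm (angmom x v))\<^sup>2"
    using norm_cross_dot[of v "angmom x v"] by simp
  then show ?thesis by (simp add: power2_eq_iff_nonneg)
qed

lemma cross_v_L: "cross3 v (angmom x v) = lrl \<mu> x v + (\<mu> / norm x) *\<^sub>R x"
  by (simp add: lrl_def angmom_def)

lemma sq_le_sqrt: "0 < k \<Longrightarrow> k / 2 * a\<^sup>2 \<le> c \<Longrightarrow> 0 \<le> a \<Longrightarrow> a \<le> sqrt (2 * c / k)"
proof -
  assume k: "0 < k" and h: "k / 2 * a\<^sup>2 \<le> c" and a: "0 \<le> a"
  have "a\<^sup>2 \<le> 2 * c / k" using k h by (simp add: field_simps)
  from real_sqrt_le_mono[OF this] show ?thesis using a by simp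
qed

locale kep =
  fixes \<mu> k1 k2 c :: real and L0 A0 :: vec3
  assumes mu: "\<mu> > 0" and k1: "k1 > 0" and k2: "k2 > 0" and L0: "L0 \<noteq> 0" and A0: "norm A0 < \<mu>"
    and perp: "L0 \<bullet> A0 = 0" and c0: "0 < c" and c1: "c < k1 * (norm L0)\<^sup>2 / 2"
    and c2: "c < k2 * (\<mu> - norm A0)\<^sup>2 / 2"

context kep begin

definition "dl = sqrt (2 * c / k1)"
definition "da = sqrt (2 * c / k2)"
definition "lmin = norm L0 - dl"
definition "lmax = norm L0 + dl"
definition "amax = norm A0 + da"
definition "r0 = lmin\<^sup>2 / (2 * \<mu>)"
definition "Rx = lmax\<^sup>2 / (\<mu> - amax)"
definition "Rv = 2 * \<mu> / lmin"

lemma dl_lt: "dl < norm L0"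
proof -
  have "2 * c / k1 < (norm L0)\<^sup>2" using c1 k1 by (simp add: field_simps)
  from real_sqrt_less_mono[OF this] show ?thesis unfolding dl_def by simp
qed

lemma da_lt: "da < \<mu> - norm A0"
proof -
  have "2 * c / k2 < (\<mu> - norm A0)\<^sup>2" using c2 k2 by (simp add: field_simps)
  from real_sqrt_less_mono[OF this] show ?thesis unfolding da_def using A0 by simp
qed

lemma dl_nn: "dl \<ge> 0" and da_nn: "da \<ge> 0"
  unfolding dl_def da_def using c0 k1 k2 by auto

lemma lmin_pos: "lmin > 0" using dl_lt by (simp add: lmin_def)
lemma amax_lt: "amax < \<mu>" using da_lt by (simp add: amax_def)
lemma r0_pos: "r0 > 0" using lmin_pos mu by (simp add: r0_def)
lemma Rv_pos: "Rv > 0" using lmin_pos mu by (simp add: Rv_def)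
lemma amax_nn: "amax \<ge> 0" using da_nn by (simp add: amax_def)

lemma K_bounds:
  assumes x: "x \<noteq> 0" and V: "lyapV \<mu> k1 k2 L0 A0 x v \<le> c"
  shows "lmin \<le> norm (angmom x v)" "norm (angmom x v) \<le> lmax" "norm (lrl \<mu> x v) \<le> amax"
    "r0 \<le> norm x" "norm x \<le> Rx" "norm v \<le> Rv"
proof -
  have t1: "k1 / 2 * (norm (angmom x v - L0))\<^sup>2 \<le> c"
    using V k2 unfolding lyapV_def by (smt (verit) zero_le_power2 divide_nonneg_nonneg mult_nonneg_nonneg)
  have t2: "k2 / 2 * (norm (lrl \<mu> x v - A0))\<^sup>2 \<le> c"
    using V k1 unfolding lyapV_def by (smt (verit) zero_le_power2 divide_nonneg_nonneg mult_nonneg_nonneg)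
  have e1: "norm (angmom x v - L0) \<le> dl" unfolding dl_def by (rule sq_le_sqrt[OF k1 t1]) simp
  have e2: "norm (lrl \<mu> x v - A0) \<le> da" unfolding da_def by (rule sq_le_sqrt[OF k2 t2]) simp
  have "norm L0 \<le> norm (angmom x v) + norm (angmom x v - L0)" by (metis norm_triangle_sub norm_minus_commute)
  then show L1: "lmin \<le> norm (angmom x v)" using e1 by (simp add: lmin_def)
  have "norm (angmom x v) \<le> norm L0 + norm (angmom x v - L0)" by (metis norm_triangle_sub)
  then show L2: "norm (angmom x v) \<le> lmax" using e1 by (simp add: lmax_def)
  have "norm (lrl \<mu> x v) \<le> norm A0 + norm (lrl \<mu> x v - A0)" by (metis norm_triangle_sub)
  then show A1: "norm (lrl \<mu> x v) \<le> amax" using e2 by (simp add: amax_def)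
  define l where "l = norm (angmom x v)"
  define a where "a = norm (lrl \<mu> x v)"
  define n where "n = norm x"
  have npos: "n > 0" using x by (simp add: n_def)
  have ax: "lrl \<mu> x v \<bullet> x = l\<^sup>2 - \<mu> * n" using lrl_dot_x[OF x] by (simp add: l_def n_def)
  have cs: "\<bar>lrl \<mu> x v \<bullet> x\<bar> \<le> a * n" unfolding a_def n_def by (rule Cauchy_Schwarz_ineq2)
  have lpos: "l \<ge> lmin" using L1 by (simp add: l_def)
  have a_lt: "a < \<mu>" using A1 amax_lt by (simp add: a_def)
  have "l\<^sup>2 \<le> (\<mu> + a) * n" using ax cs by (simp add: algebra_simps abs_le_iff)
  also have "\<dots> \<le> (2 * \<mu>) * n" using a_lt npos by (intro mult_right_mono) auto
  finally have "l\<^sup>2 \<le> 2 * \<mu> * n" .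
  moreover have "lmin\<^sup>2 \<le> l\<^sup>2" using lpos lmin_pos by (intro power_mono) auto
  ultimately show "r0 \<le> norm x" unfolding r0_def n_def[symmetric] using mu
    by (simp add: divide_le_eq mult.commute)
  have "(\<mu> - a) * n \<le> l\<^sup>2" using ax cs by (simp add: algebra_simps abs_le_iff)
  also have "\<dots> \<le> lmax\<^sup>2" using L2 by (intro power_mono) (auto simp: l_def)
  finally have h: "(\<mu> - a) * n \<le> lmax\<^sup>2" .
  have "(\<mu> - amax) * n \<le> (\<mu> - a) * n" using A1 npos by (intro mult_right_mono) (auto simp: a_def)
  with h have "(\<mu> - amax) * n \<le> lmax\<^sup>2" by linarith
  then show "norm x \<le> Rx" unfolding Rx_def n_def[symmetric] using amax_lt
    by (simp add: le_divide_eq mult.commute)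
  have "norm v * l = norm (lrl \<mu> x v + (\<mu> / norm x) *\<^sub>R x)"
    using norm_v_L[of v x] cross_v_L[of v x \<mu>] by (simp add: l_def)
  also have "\<dots> \<le> a + \<mu>"
  proof -
    have "norm ((\<mu> / norm x) *\<^sub>R x) = \<mu>" using x mu by simp
    then show ?thesis using norm_triangle_ineq[of "lrl \<mu> x v" "(\<mu> / norm x) *\<^sub>R x"] by (simp add: a_def)
  qed
  also have "\<dots> \<le> 2 * \<mu>" using a_lt by simp
  finally have "norm v * l \<le> 2 * \<mu>" .
  moreover have "norm v * lmin \<le> norm v * l" using lpos by (simp add: mult_left_mono)
  ultimately have "norm v * lmin \<le> 2 * \<mu>" by linarith
  then show "norm v \<le> Rv" unfolding Rv_def using lmin_pos by (simp add: le_divide_eq)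
qed

definition "Kset = {y :: vec3 \<times> vec3. fst y \<noteq> 0 \<and> lyapV \<mu> k1 k2 L0 A0 (fst y) (snd y) \<le> c}"

lemma cont_lyapV: "continuous_on {y :: vec3 \<times> vec3. fst y \<noteq> 0} (\<lambda>y. lyapV \<mu> k1 k2 L0 A0 (fst y) (snd y))"
  unfolding lyapV_def angmom_def lrl_def
  by (intro continuous_intros continuous_on_cross) auto

lemma cont_G: "continuous_on {y :: vec3 \<times> vec3. fst y \<noteq> 0} (\<lambda>y. G \<mu> k1 k2 L0 A0 (fst y) (snd y))"
  unfolding G_def gx_def gv_def Let_def angmom_def lrl_def
  by (intro continuous_intros continuous_on_cross) auto

lemma Kset_eq: "Kset = {y. r0 \<le> norm (fst y)} \<inter> (\<lambda>y. lyapV \<mu> k1 k2 L0 A0 (fst y) (snd y)) -` {..c}"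
proof (intro set_eqI iffI)
  fix y assume "y \<in> Kset"
  then show "y \<in> {y. r0 \<le> norm (fst y)} \<inter> (\<lambda>y. lyapV \<mu> k1 k2 L0 A0 (fst y) (snd y)) -` {..c}"
    using K_bounds(4)[of "fst y" "snd y"] unfolding Kset_def by auto
next
  fix y assume "y \<in> {y. r0 \<le> norm (fst y)} \<inter> (\<lambda>y. lyapV \<mu> k1 k2 L0 A0 (fst y) (snd y)) -` {..c}"
  then have "r0 \<le> norm (fst y)" "lyapV \<mu> k1 k2 L0 A0 (fst y) (snd y) \<le> c" by auto
  moreover then have "fst y \<noteq> 0" using r0_pos by (metis norm_zero not_less)
  ultimately show "y \<in> Kset" unfolding Kset_def by auto
qed

lemma Kset_closed: "closed Kset"
proof -
  have cl: "closed {y :: vec3 \<times> vec3. r0 \<le> norm (fst y)}"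
    by (intro closed_Collect_le continuous_intros)
  have "continuous_on {y :: vec3 \<times> vec3. r0 \<le> norm (fst y)} (\<lambda>y. lyapV \<mu> k1 k2 L0 A0 (fst y) (snd y))"
    by (rule continuous_on_subset[OF cont_lyapV]) (use r0_pos in auto)
  from continuous_closed_preimage[OF this cl closed_atMost] show ?thesis unfolding Kset_eq .
qed

lemma Kset_bounded: "bounded Kset"
proof -
  have "Kset \<subseteq> cball 0 (Rx + Rv)"
  proof
    fix y assume "y \<in> Kset"
    then have "norm (fst y) \<le> Rx" "norm (snd y) \<le> Rv" using K_bounds unfolding Kset_def by auto
    moreover have "norm y \<le> norm (fst y) + norm (snd y)"
      using sqrt_sum_squares_le_sum[of "norm (fst y)" "norm (snd y)"] by (simp add: norm_prod_def)
    ultimately show "y \<in> cball 0 (Rx + Rv)" by simp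
  qed
  then show ?thesis using bounded_cball bounded_subset by blast
qed

lemma Kset_compact: "compact Kset"
  using Kset_closed Kset_bounded by (simp add: compact_eq_bounded_closed)

lemma Kset_sub: "Kset \<subseteq> {y. fst y \<noteq> 0}" unfolding Kset_def by auto

end


lemma traj_lip:
  fixes y :: "real \<Rightarrow> 'a::real_normed_vector"
  assumes d: "\<And>t. t \<ge> 0 \<Longrightarrow> (y has_vector_derivative y' t) (at t within {0..})"
    and b: "\<And>t. t \<ge> 0 \<Longrightarrow> norm (y' t) \<le> M" and st: "0 \<le> s" "0 \<le> t"
  shows "norm (y t - y s) \<le> M * \<bar>t - s\<bar>"
proof -
  have "norm (y t - y s) \<le> M * norm (t - s)"
  proof (rule differentiable_bound[where f'="\<lambda>t h. h *\<^sub>R y' t"])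
    show "convex {0::real..}" by simp
    show "\<And>x. x \<in> {0..} \<Longrightarrow> (y has_derivative (\<lambda>h. h *\<^sub>R y' x)) (at x within {0..})"
      using d by (simp add: has_vector_derivative_def)
    show "\<And>x. x \<in> {0..} \<Longrightarrow> onorm (\<lambda>h. h *\<^sub>R y' x) \<le> M"
    proof -
      fix x :: real assume "x \<in> {0..}"
      have "onorm (\<lambda>h::real. h *\<^sub>R y' x) = onorm (\<lambda>h::real. h) * norm (y' x)"
        by (rule onorm_scaleR_left[OF bounded_linear_ident])
      also have "onorm (\<lambda>h::real. h) = 1" by (rule onorm_id)
      finally show "onorm (\<lambda>h. h *\<^sub>R y' x) \<le> M" using b \<open>x \<in> {0..}\<close> by simp
    qed
  qed (use st in auto)
  then show ?thesis by simp
qed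

definition fF :: "real \<Rightarrow> real \<Rightarrow> real \<Rightarrow> vec3 \<Rightarrow> vec3 \<Rightarrow> vec3 \<times> vec3 \<Rightarrow> vec3 \<times> vec3" where
  "fF \<mu> k1 k2 L0 A0 p = (ctrl_x \<mu> k1 k2 L0 A0 (fst p) (snd p), ctrl_v \<mu> k1 k2 L0 A0 (fst p) (snd p))"

lemma cont_fF: "continuous_on {y :: vec3 \<times> vec3. fst y \<noteq> 0} (fF \<mu> k1 k2 L0 A0)"
  unfolding fF_def ctrl_x_def ctrl_v_def Let_def angmom_def lrl_def
  by (intro continuous_intros continuous_on_cross) auto

lemma ctrl_sol_pair:
  assumes "ctrl_sol \<mu> k1 k2 L0 A0 I x v" "t \<in> I"
  shows "((\<lambda>s. (x s, v s)) has_vector_derivative fF \<mu> k1 k2 L0 A0 (x t, v t)) (at t within I)"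
  using assms unfolding ctrl_sol_def fF_def by (auto intro!: has_vector_derivative_Pair)

context kep begin

lemma sol_in_K:
  assumes I: "is_interval I" "0 \<in> I" "I \<subseteq> {0..}" and sol: "ctrl_sol \<mu> k1 k2 L0 A0 I x v"
    and V0: "lyapV \<mu> k1 k2 L0 A0 (x 0) (v 0) \<le> c" and t: "t \<in> I"
  shows "(x t, v t) \<in> Kset"
proof -
  have "lyapV \<mu> k1 k2 L0 A0 (x t) (v t) \<le> lyapV \<mu> k1 k2 L0 A0 (x 0) (v 0)"
    using ctrl_V_decr[OF I(1) sol I(2) t] t I(3) by auto
  moreover have "x t \<noteq> 0" using sol t by (simp add: ctrl_sol_def)
  ultimately show ?thesis using V0 unfolding Kset_def by auto
qed

lemma G_pos_K: "p \<in> Kset \<Longrightarrow> G \<mu> k1 k2 L0 A0 (fst p) (snd p) = 0 \<Longrightarrow> p \<in> target_set \<mu> L0 A0"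
proof -
  assume p: "p \<in> Kset" and g: "G \<mu> k1 k2 L0 A0 (fst p) (snd p) = 0"
  have x: "fst p \<noteq> 0" and V: "lyapV \<mu> k1 k2 L0 A0 (fst p) (snd p) \<le> c" using p by (auto simp: Kset_def)
  have "angmom (fst p) (snd p) \<noteq> 0" using K_bounds(1)[OF x V] lmin_pos by auto
  from G_zero[OF k1 k2 x this perp g] x show ?thesis
    by (cases p) (simp add: target_set_def)
qed

lemma converge:
  assumes sol: "ctrl_sol \<mu> k1 k2 L0 A0 {0..} x v" and V0: "lyapV \<mu> k1 k2 L0 A0 (x 0) (v 0) \<le> c"
  shows "((\<lambda>t. infdist (x t, v t) (target_set \<mu> L0 A0)) \<longlongrightarrow> 0) at_top"
proof -
  define y where "y = (\<lambda>t. (x t, v t))"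
  define Vf where "Vf = (\<lambda>t. lyapV \<mu> k1 k2 L0 A0 (x t) (v t))"
  define Gp where "Gp = (\<lambda>p. G \<mu> k1 k2 L0 A0 (fst p) (snd p))"
  have inK: "\<And>t. t \<ge> 0 \<Longrightarrow> y t \<in> Kset"
    using sol_in_K[OF _ _ _ sol V0] by (simp add: y_def is_interval_ci)
  have "compact (fF \<mu> k1 k2 L0 A0 ` Kset)"
    by (rule compact_continuous_image[OF continuous_on_subset[OF cont_fF Kset_sub] Kset_compact])
  then have "bounded (fF \<mu> k1 k2 L0 A0 ` Kset)" by (rule compact_imp_bounded)
  then obtain M where M0: "M > 0" "\<forall>z\<in>fF \<mu> k1 k2 L0 A0 ` Kset. norm z \<le> M"
    using bounded_pos by blast
  then have M: "M > 0" "\<And>p. p \<in> Kset \<Longrightarrow> norm (fF \<mu> k1 k2 L0 A0 p) \<le> M" by auto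
  have yd: "\<And>t. t \<ge> 0 \<Longrightarrow> (y has_vector_derivative fF \<mu> k1 k2 L0 A0 (y t)) (at t within {0..})"
    using ctrl_sol_pair[OF sol] by (simp add: y_def)
  have ylip: "\<And>s t. 0 \<le> s \<Longrightarrow> 0 \<le> t \<Longrightarrow> norm (y t - y s) \<le> M * \<bar>t - s\<bar>"
    by (rule traj_lip[OF yd]) (use M inK in auto)
  have Vd: "\<And>t. t \<ge> 0 \<Longrightarrow> (Vf has_real_derivative - Gp (y t)) (at t within {0..})"
    using ctrl_V_deriv[OF sol] by (simp add: Vf_def Gp_def y_def)
  have Vdecr: "\<And>s t. 0 \<le> s \<Longrightarrow> s \<le> t \<Longrightarrow> Vf t \<le> Vf s"
    using ctrl_V_decr[OF is_interval_ci sol] by (simp add: Vf_def)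
  have Vnn: "\<And>t. Vf t \<ge> 0" using k1 k2 by (simp add: Vf_def lyapV_nonneg)
  define l where "l = Inf (Vf ` {0..})"
  have bdd: "bdd_below (Vf ` {0..})" using Vnn by (intro bdd_belowI[of _ 0]) auto
  have stepa: "\<And>\<epsilon> \<delta>. \<epsilon> > 0 \<Longrightarrow> \<delta> \<ge> 0 \<Longrightarrow> \<exists>T\<ge>0. \<forall>t\<ge>T. Vf t - Vf (t + \<delta>) < \<epsilon>"
  proof -
    fix \<epsilon> \<delta> :: real assume e: "\<epsilon> > 0" and d: "\<delta> \<ge> 0"
    have "Inf (Vf ` {0..}) < l + \<epsilon>" using e by (simp add: l_def)
    then obtain T where T: "T \<ge> 0" "Vf T < l + \<epsilon>"
      using cInf_less_iff[of "Vf ` {0..}" "l + \<epsilon>"] bdd by auto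
    have "\<forall>t\<ge>T. Vf t - Vf (t + \<delta>) < \<epsilon>"
    proof (intro allI impI)
      fix t assume "T \<le> t"
      then have "Vf t \<le> Vf T" using Vdecr T by auto
      moreover have "l \<le> Vf (t + \<delta>)" unfolding l_def
        by (rule cInf_lower[OF _ bdd]) (use \<open>T \<le> t\<close> T d in auto)
      ultimately show "Vf t - Vf (t + \<delta>) < \<epsilon>" using T by linarith
    qed
    then show "\<exists>T\<ge>0. \<forall>t\<ge>T. Vf t - Vf (t + \<delta>) < \<epsilon>" using T by blast
  qed
  have ucG: "uniformly_continuous_on Kset Gp"
    by (rule compact_uniformly_continuous[OF continuous_on_subset[OF cont_G Kset_sub] Kset_compact,
          folded Gp_def])
  have stepb: "\<And>\<eta>. \<eta> > 0 \<Longrightarrow> \<exists>T. \<forall>t\<ge>T. Gp (y t) < \<eta>"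
  proof (rule ccontr)
    fix \<eta> :: real assume eta: "\<eta> > 0" and neg: "\<not> (\<exists>T. \<forall>t\<ge>T. Gp (y t) < \<eta>)"
    have e2: "\<eta> / 2 > 0" using eta by simp
    obtain d where d0: "d > 0" "\<forall>p\<in>Kset. \<forall>q\<in>Kset. dist q p < d \<longrightarrow> dist (Gp q) (Gp p) < \<eta> / 2"
      using ucG e2 unfolding uniformly_continuous_on_def by blast
    then have d: "d > 0" "\<And>p q. p \<in> Kset \<Longrightarrow> q \<in> Kset \<Longrightarrow> dist q p < d \<Longrightarrow> dist (Gp q) (Gp p) < \<eta> / 2"
      by auto
    define \<delta> where "\<delta> = d / (2 * M)"
    have dpos: "\<delta> > 0" using d M by (simp add: \<delta>_def)
    have Md: "M * \<delta> < d" using d M by (simp add: \<delta>_def)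
    obtain T where T: "T \<ge> 0" "\<forall>t\<ge>T. Vf t - Vf (t + \<delta>) < \<eta> * \<delta> / 2"
      using stepa[of "\<eta> * \<delta> / 2" \<delta>] eta dpos by auto
    from neg have "\<exists>t\<ge>T. \<not> Gp (y t) < \<eta>" by blast
    then obtain t where t0': "t \<ge> T" "\<not> Gp (y t) < \<eta>" by blast
    then have t: "t \<ge> T" "Gp (y t) \<ge> \<eta>" by auto
    have t0: "t \<ge> 0" using t T by linarith
    have big: "\<And>s. t \<le> s \<Longrightarrow> s \<le> t + \<delta> \<Longrightarrow> Gp (y s) > \<eta> / 2"
    proof -
      fix s assume s: "t \<le> s" "s \<le> t + \<delta>"
      have "norm (y s - y t) \<le> M * \<bar>s - t\<bar>" using ylip[of t s] s t0 by simp
      also have "\<dots> \<le> M * \<delta>" using s M by (intro mult_left_mono) auto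
      finally have "dist (y s) (y t) < d" using Md by (simp add: dist_norm)
      then have "dist (Gp (y s)) (Gp (y t)) < \<eta> / 2" using d(2) inK s t0 by auto
      then have "Gp (y t) - Gp (y s) < \<eta> / 2" unfolding dist_real_def by linarith
      then show "Gp (y s) > \<eta> / 2" using t(2) by linarith
    qed
    have "\<And>s. t \<le> s \<Longrightarrow> s \<le> t + \<delta> \<Longrightarrow> (Vf has_derivative (\<lambda>h. (- Gp (y s)) * h)) (at s within {t..t+\<delta>})"
    proof -
      fix s assume s: "t \<le> s" "s \<le> t + \<delta>"
      have sub: "{t..t+\<delta>} \<subseteq> {0..}" using t0 by auto
      have "s \<ge> 0" using s t0 by linarith
      from has_field_derivative_subset[OF Vd[OF this] sub]
      show "(Vf has_derivative (\<lambda>h. (- Gp (y s)) * h)) (at s within {t..t+\<delta>})"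
        unfolding has_field_derivative_def .
    qed
    from mvt_very_simple[OF _ this] dpos obtain s where s: "s \<in> {t..t+\<delta>}" "Vf (t + \<delta>) - Vf t = - Gp (y s) * \<delta>"
      by auto
    have "Gp (y s) * \<delta> \<ge> \<eta> / 2 * \<delta>" using big[of s] s dpos by (intro mult_right_mono) auto
    then have "Vf t - Vf (t + \<delta>) \<ge> \<eta> * \<delta> / 2" using s(2) by simp
    moreover have "Vf t - Vf (t + \<delta>) < \<eta> * \<delta> / 2" using T(2) t(1) by blast
    ultimately show False by linarith
  qed
  show ?thesis
  proof (rule tendstoI)
    fix \<epsilon> :: real assume e: "\<epsilon> > 0"
    define Ke where "Ke = Kset \<inter> {p. \<epsilon> \<le> infdist p (target_set \<mu> L0 A0)}"
    have Kec: "compact Ke" unfolding Ke_def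
      by (rule compact_Int_closed[OF Kset_compact]) (intro closed_Collect_le continuous_intros)
    show "\<forall>\<^sub>F t in at_top. dist (infdist (x t, v t) (target_set \<mu> L0 A0)) 0 < \<epsilon>"
    proof (cases "Ke = {}")
      case True
      have "\<forall>t\<ge>0. dist (infdist (x t, v t) (target_set \<mu> L0 A0)) 0 < \<epsilon>"
      proof (intro allI impI)
        fix t :: real assume "t \<ge> 0"
        then have yk: "y t \<in> Kset" by (rule inK)
        have "\<not> \<epsilon> \<le> infdist (y t) (target_set \<mu> L0 A0)"
        proof
          assume "\<epsilon> \<le> infdist (y t) (target_set \<mu> L0 A0)"
          then have "y t \<in> Ke" using yk unfolding Ke_def by blast
          then show False using True by blast
        qed
        then show "dist (infdist (x t, v t) (target_set \<mu> L0 A0)) 0 < \<epsilon>"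
          by (simp add: y_def infdist_nonneg)
      qed
      then show ?thesis unfolding eventually_at_top_linorder by blast
    next
      case False
      have "Ke \<subseteq> Kset" unfolding Ke_def by (rule Int_lower1)
      then have KeS: "Ke \<subseteq> {y. fst y \<noteq> 0}" using Kset_sub by (rule subset_trans)
      have cG: "continuous_on Ke Gp" unfolding Gp_def by (rule continuous_on_subset[OF cont_G KeS])
      have "\<exists>q\<in>Ke. \<forall>p\<in>Ke. Gp q \<le> Gp p" by (rule continuous_attains_inf[OF Kec False cG])
      then obtain q where q0: "q \<in> Ke" "\<forall>p\<in>Ke. Gp q \<le> Gp p" by (elim bexE)
      then have q: "q \<in> Ke" "\<And>p. p \<in> Ke \<Longrightarrow> Gp q \<le> Gp p" by auto
      have "Gp q \<noteq> 0"
      proof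
        assume "Gp q = 0"
        then have "q \<in> target_set \<mu> L0 A0" using G_pos_K q(1) unfolding Ke_def Gp_def by auto
        then show False using q(1) e unfolding Ke_def by auto
      qed
      moreover have "Gp q \<ge> 0" unfolding Gp_def by (rule G_nonneg)
      ultimately have gq: "Gp q > 0" by linarith
      obtain T where T: "\<forall>t\<ge>T. Gp (y t) < Gp q" using stepb[OF gq] by blast
      have "\<forall>t\<ge>max T 0. dist (infdist (x t, v t) (target_set \<mu> L0 A0)) 0 < \<epsilon>"
      proof (intro allI impI)
        fix t assume "max T 0 \<le> t"
        then have yk: "y t \<in> Kset" and lt: "Gp (y t) < Gp q" using inK T by auto
        have "y t \<notin> Ke"
        proof
          assume "y t \<in> Ke"
          then have "Gp q \<le> Gp (y t)" by (rule q(2))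
          then show False using lt by linarith
        qed
        then have "\<not> \<epsilon> \<le> infdist (y t) (target_set \<mu> L0 A0)" using yk unfolding Ke_def by blast
        then show "dist (infdist (x t, v t) (target_set \<mu> L0 A0)) 0 < \<epsilon>"
          by (simp add: y_def infdist_nonneg)
      qed
      then show ?thesis unfolding eventually_at_top_linorder by blast
    qed
  qed
qed

end


definition BL :: "('p::metric_space \<Rightarrow> 'b::real_normed_vector) \<Rightarrow> bool" where
  "BL f \<longleftrightarrow> (\<exists>B. \<forall>p. norm (f p) \<le> B) \<and> (\<exists>L. \<forall>p q. norm (f p - f q) \<le> L * dist p q)"

lemma BLI: "(\<And>p. norm (f p) \<le> B) \<Longrightarrow> (\<And>p q. norm (f p - f q) \<le> L * dist p q) \<Longrightarrow> BL f"
  unfolding BL_def by blast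

lemma BLE:
  assumes "BL f"
  obtains B L where "B \<ge> 0" "L \<ge> 0" "\<And>p. norm (f p) \<le> B" "\<And>p q. norm (f p - f q) \<le> L * dist p q"
proof -
  from assms obtain B L where b: "\<And>p. norm (f p) \<le> B" and l: "\<And>p q. norm (f p - f q) \<le> L * dist p q"
    unfolding BL_def by blast
  show ?thesis
  proof (rule that[of "max B 0" "max L 0"])
    show "\<And>p. norm (f p) \<le> max B 0" using b by (meson max.coboundedI1)
    show "\<And>p q. norm (f p - f q) \<le> max L 0 * dist p q"
      by (meson l max.cobounded1 mult_right_mono order_trans zero_le_dist)
  qed auto
qed

lemma BL_const [intro]: "BL (\<lambda>p. c)"
  by (rule BLI[of _ "norm c" 0]) auto

lemma BL_add [intro]: "BL f \<Longrightarrow> BL g \<Longrightarrow> BL (\<lambda>p. f p + g p)"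
proof -
  assume "BL f" "BL g"
  then obtain B1 L1 B2 L2 where f: "\<And>p. norm (f p) \<le> B1" "\<And>p q. norm (f p - f q) \<le> L1 * dist p q"
    and g: "\<And>p. norm (g p) \<le> B2" "\<And>p q. norm (g p - g q) \<le> L2 * dist p q"
    by (metis BLE)
  show ?thesis
  proof (rule BLI[of _ "B1 + B2" "L1 + L2"])
    show "norm (f p + g p) \<le> B1 + B2" for p by (rule order.trans[OF norm_triangle_ineq add_mono[OF f(1) g(1)]])
    show "norm (f p + g p - (f q + g q)) \<le> (L1 + L2) * dist p q" for p q
    proof -
      have "norm (f p + g p - (f q + g q)) \<le> norm (f p - f q) + norm (g p - g q)"
        by (metis (no_types, lifting) add_diff_add norm_triangle_ineq)
      also have "\<dots> \<le> L1 * dist p q + L2 * dist p q" using f(2) g(2) by (rule add_mono)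
      finally show ?thesis by (simp add: distrib_right)
    qed
  qed
qed

lemma BL_minus [intro]: "BL f \<Longrightarrow> BL (\<lambda>p. - f p)"
  unfolding BL_def by (simp add: norm_minus_commute)

lemma BL_diff [intro]: "BL f \<Longrightarrow> BL g \<Longrightarrow> BL (\<lambda>p. f p - g p)"
  using BL_add[of f "\<lambda>p. - g p"] BL_minus[of g] by simp

lemma BL_bilin:
  assumes bb: "bounded_bilinear pp" and "BL f" "BL g"
  shows "BL (\<lambda>p. pp (f p) (g p))"
proof -
  from assms(2,3) obtain B1 L1 B2 L2 where f: "B1 \<ge> 0" "L1 \<ge> 0" "\<And>p. norm (f p) \<le> B1" "\<And>p q. norm (f p - f q) \<le> L1 * dist p q"
    and g: "B2 \<ge> 0" "L2 \<ge> 0" "\<And>p. norm (g p) \<le> B2" "\<And>p q. norm (g p - g q) \<le> L2 * dist p q"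
    by (metis BLE)
  obtain K where K: "K > 0" "\<And>a b. norm (pp a b) \<le> norm a * norm b * K"
    using bounded_bilinear.pos_bounded[OF bb] by blast
  show ?thesis
  proof (rule BLI[of _ "B1 * B2 * K" "(L1 * B2 + B1 * L2) * K"])
    fix p
    have "norm (pp (f p) (g p)) \<le> norm (f p) * norm (g p) * K" by (rule K(2))
    also have "\<dots> \<le> B1 * B2 * K" using f g K by (intro mult_right_mono mult_mono) auto
    finally show "norm (pp (f p) (g p)) \<le> B1 * B2 * K" .
  next
    fix p q
    have e: "pp (f p) (g p) - pp (f q) (g q) = pp (f p - f q) (g p) + pp (f q) (g p - g q)"
      by (simp add: bounded_bilinear.diff_left[OF bb] bounded_bilinear.diff_right[OF bb])
    have "norm (pp (f p) (g p) - pp (f q) (g q)) \<le> norm (pp (f p - f q) (g p)) + norm (pp (f q) (g p - g q))"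
      unfolding e by (rule norm_triangle_ineq)
    also have "\<dots> \<le> norm (f p - f q) * norm (g p) * K + norm (f q) * norm (g p - g q) * K"
      by (rule add_mono[OF K(2) K(2)])
    also have "\<dots> \<le> (L1 * dist p q) * B2 * K + B1 * (L2 * dist p q) * K"
      using f g K by (intro add_mono mult_right_mono mult_mono) auto
    finally show "norm (pp (f p) (g p) - pp (f q) (g q)) \<le> (L1 * B2 + B1 * L2) * K * dist p q"
      by (simp add: algebra_simps)
  qed
qed

lemma BL_cross [intro]: "BL f \<Longrightarrow> BL g \<Longrightarrow> BL (\<lambda>p. cross3 (f p) (g p))"
  by (rule BL_bilin[OF bb_cross])
lemma BL_scaleR [intro]: "BL f \<Longrightarrow> BL g \<Longrightarrow> BL (\<lambda>p. f p *\<^sub>R g p)"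
  by (rule BL_bilin[OF bounded_bilinear_scaleR])
lemma BL_inner [intro]: "BL f \<Longrightarrow> BL g \<Longrightarrow> BL (\<lambda>p. inner (f p) (g p))"
  by (rule BL_bilin[OF bounded_bilinear_inner])
lemma BL_mult [intro]: "BL f \<Longrightarrow> BL g \<Longrightarrow> BL (\<lambda>p. (f p :: real) * g p)"
  by (rule BL_bilin[OF bounded_bilinear_mult])

lemma BL_pair [intro]: "BL f \<Longrightarrow> BL g \<Longrightarrow> BL (\<lambda>p. (f p, g p))"
proof -
  assume "BL f" "BL g"
  then obtain B1 L1 B2 L2 where f: "\<And>p. norm (f p) \<le> B1" "\<And>p q. norm (f p - f q) \<le> L1 * dist p q"
    and g: "\<And>p. norm (g p) \<le> B2" "\<And>p q. norm (g p - g q) \<le> L2 * dist p q"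
    by (metis BLE)
  have np: "\<And>a b. norm (a, b) \<le> norm a + norm b"
    using sqrt_sum_squares_le_sum by (simp add: norm_Pair)
  show ?thesis
  proof (rule BLI[of _ "B1 + B2" "L1 + L2"])
    show "norm (f p, g p) \<le> B1 + B2" for p using np[of "f p" "g p"] f(1)[of p] g(1)[of p] by linarith
    show "norm ((f p, g p) - (f q, g q)) \<le> (L1 + L2) * dist p q" for p q
      using np[of "f p - f q" "g p - g q"] f(2)[of p q] g(2)[of p q] by (simp add: distrib_right)
  qed
qed

lemma BL_norm [intro]: "BL f \<Longrightarrow> BL (\<lambda>p. norm (f p))"
proof -
  assume "BL f"
  then obtain B L where f: "\<And>p. norm (f p) \<le> B" "\<And>p q. norm (f p - f q) \<le> L * dist p q"
    by (metis BLE)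
  show ?thesis
    by (rule BLI[of _ B L]) (use f in \<open>auto intro: order.trans[OF norm_triangle_ineq3]\<close>)
qed

lemma BL_max [intro]: "BL f \<Longrightarrow> BL (\<lambda>p. max r (f p :: real))"
proof -
  assume "BL f"
  then obtain B L where f: "\<And>p. norm (f p) \<le> B" "\<And>p q. norm (f p - f q) \<le> L * dist p q"
    by (metis BLE)
  show ?thesis
  proof (rule BLI[of _ "max \<bar>r\<bar> B" L])
    show "norm (max r (f p)) \<le> max \<bar>r\<bar> B" for p using f(1)[of p] by (auto simp: max_def)
    show "norm (max r (f p) - max r (f q)) \<le> L * dist p q" for p q
      using f(2)[of p q] by (auto simp: max_def)
  qed
qed

lemma BL_inv:
  assumes "BL f" "r > 0" "\<And>p. f p \<ge> r"
  shows "BL (\<lambda>p. 1 / (f p :: real))"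
proof -
  from assms(1) obtain B L where f: "L \<ge> 0" "\<And>p q. norm (f p - f q) \<le> L * dist p q"
    by (metis BLE)
  show ?thesis
  proof (rule BLI[of _ "1 / r" "L / r\<^sup>2"])
    show "norm (1 / f p) \<le> 1 / r" for p using assms(2) assms(3)[of p] by (simp add: frac_le)
    show "norm (1 / f p - 1 / f q) \<le> L / r\<^sup>2 * dist p q" for p q
    proof -
      have pp: "f p > 0" "f q > 0" using assms(2,3) by (meson less_le_trans)+
      have "norm (1 / f p - 1 / f q) = \<bar>f q - f p\<bar> / (f p * f q)"
        using pp by (simp add: field_simps abs_div)
      also have "\<dots> \<le> \<bar>f q - f p\<bar> / r\<^sup>2"
        using pp assms(2) assms(3)[of p] assms(3)[of q]
        by (intro divide_left_mono) (auto simp: power2_eq_square intro: mult_mono)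
      also have "\<dots> \<le> (L * dist p q) / r\<^sup>2"
        using f(2)[of q p] assms(2) by (intro divide_right_mono) (auto simp: dist_commute)
      finally show ?thesis by simp
    qed
  qed
qed

lemma BL_clamp:
  fixes h :: "'p::metric_space \<Rightarrow> 'a::{real_inner,heine_borel}"
  assumes h: "\<And>p q. dist (h p) (h q) \<le> dist p q" and R: "R \<ge> 0"
  shows "BL (\<lambda>p. closest_point (cball 0 R) (h p))"
proof (rule BLI[of _ R 1])
  have ne: "cball (0::'a) R \<noteq> {}" using R by auto
  show "norm (closest_point (cball 0 R) (h p)) \<le> R" for p
    using closest_point_in_set[OF closed_cball ne, of "h p"] by simp
  show "norm (closest_point (cball 0 R) (h p) - closest_point (cball 0 R) (h q)) \<le> 1 * dist p q" for p q
    using closest_point_lipschitz[OF convex_cball closed_cball ne, of "h p" "h q"] h[of p q]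
    by (simp add: dist_norm)
qed

definition Fgx :: "real \<Rightarrow> real \<Rightarrow> real \<Rightarrow> vec3 \<Rightarrow> vec3 \<Rightarrow> real \<Rightarrow> vec3 \<Rightarrow> vec3 \<Rightarrow> vec3" where
  "Fgx \<mu> k1 k2 L0 A0 i x v = v - k1 *\<^sub>R cross3 v (cross3 x v - L0)
        - k2 *\<^sub>R (cross3 v (cross3 (cross3 v (cross3 x v) - (\<mu> * i) *\<^sub>R x - A0) v)
          - (\<mu> * i) *\<^sub>R (cross3 v (cross3 x v) - (\<mu> * i) *\<^sub>R x - A0)
          + (\<mu> * (i * (i * i))) *\<^sub>R ((x \<bullet> (cross3 v (cross3 x v) - (\<mu> * i) *\<^sub>R x - A0)) *\<^sub>R x))"

definition Fgv :: "real \<Rightarrow> real \<Rightarrow> real \<Rightarrow> vec3 \<Rightarrow> vec3 \<Rightarrow> real \<Rightarrow> vec3 \<Rightarrow> vec3 \<Rightarrow> vec3" where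
  "Fgv \<mu> k1 k2 L0 A0 i x v = - (\<mu> * (i * (i * i))) *\<^sub>R x - k1 *\<^sub>R cross3 (cross3 x v - L0) x
        - k2 *\<^sub>R (cross3 (cross3 x v) (cross3 v (cross3 x v) - (\<mu> * i) *\<^sub>R x - A0)
                  + cross3 x (cross3 v (cross3 v (cross3 x v) - (\<mu> * i) *\<^sub>R x - A0)))"

lemma ctrl_Fg:
  assumes "x \<noteq> 0"
  shows "ctrl_x \<mu> k1 k2 L0 A0 x v = Fgx \<mu> k1 k2 L0 A0 (1 / norm x) x v"
    and "ctrl_v \<mu> k1 k2 L0 A0 x v = Fgv \<mu> k1 k2 L0 A0 (1 / norm x) x v"
proof -
  have a: "\<mu> / norm x = \<mu> * (1 / norm x)" by simp
  have b: "\<mu> / norm x ^ 3 = \<mu> * (1 / norm x * (1 / norm x * (1 / norm x)))" by (simp add: power3_eq_cube)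
  show "ctrl_x \<mu> k1 k2 L0 A0 x v = Fgx \<mu> k1 k2 L0 A0 (1 / norm x) x v"
    unfolding ctrl_x_def Fgx_def Let_def angmom_def lrl_def a b ..
  show "ctrl_v \<mu> k1 k2 L0 A0 x v = Fgv \<mu> k1 k2 L0 A0 (1 / norm x) x v"
    unfolding ctrl_v_def Fgv_def Let_def angmom_def lrl_def a b by simp
qed

definition FG :: "real \<Rightarrow> real \<Rightarrow> real \<Rightarrow> vec3 \<Rightarrow> vec3 \<Rightarrow> real \<Rightarrow> real \<Rightarrow> vec3 \<times> vec3 \<Rightarrow> vec3 \<times> vec3" where
  "FG \<mu> k1 k2 L0 A0 r1 R p =
    (Fgx \<mu> k1 k2 L0 A0 (1 / max r1 (norm (closest_point (cball 0 R) (fst p)))) (closest_point (cball 0 R) (fst p)) (closest_point (cball 0 R) (snd p)),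
     Fgv \<mu> k1 k2 L0 A0 (1 / max r1 (norm (closest_point (cball 0 R) (fst p)))) (closest_point (cball 0 R) (fst p)) (closest_point (cball 0 R) (snd p)))"

lemma FG_BL:
  assumes r1: "r1 > 0" and R: "R \<ge> 0"
  shows "BL (FG \<mu> k1 k2 L0 A0 r1 R)"
proof -
  have X: "BL (\<lambda>p::vec3\<times>vec3. closest_point (cball 0 R) (fst p))"
    by (rule BL_clamp[OF _ R]) (simp add: dist_prod_def dist_norm norm_prod_def real_sqrt_le_mono
        order_trans[OF _ real_sqrt_le_mono[of "_\<^sup>2" "_\<^sup>2 + _"]] del: norm_eq_zero)
  have V: "BL (\<lambda>p::vec3\<times>vec3. closest_point (cball 0 R) (snd p))"
    by (rule BL_clamp[OF _ R]) (simp add: dist_prod_def dist_norm norm_prod_def real_sqrt_le_mono)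
  have I: "BL (\<lambda>p::vec3\<times>vec3. 1 / max r1 (norm (closest_point (cball 0 R) (fst p))))"
    by (rule BL_inv[OF _ r1]) (use X in auto)
  show ?thesis unfolding FG_def[abs_def] Fgx_def Fgv_def
    using X V I by (intro BL_pair BL_add BL_diff BL_minus BL_cross BL_scaleR BL_inner BL_mult BL_const) 
qed

lemma FG_eq:
  assumes r1: "r1 \<le> norm (fst p)" "r1 > 0" and R: "norm (fst p) \<le> R" "norm (snd p) \<le> R"
  shows "FG \<mu> k1 k2 L0 A0 r1 R p = fF \<mu> k1 k2 L0 A0 p"
proof -
  have "closest_point (cball 0 R) (fst p) = fst p" "closest_point (cball 0 R) (snd p) = snd p"
    using R by (auto intro: closest_point_self)
  moreover have "max r1 (norm (fst p)) = norm (fst p)" using r1 by simp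
  moreover have "fst p \<noteq> 0" using r1 by auto
  ultimately show ?thesis unfolding FG_def fF_def using ctrl_Fg by simp
qed


lemma int_lip:
  fixes g :: "real \<Rightarrow> 'a::euclidean_space"
  assumes cg: "continuous_on UNIV g" and b: "\<And>s. norm (g s) \<le> B"
  shows "norm (integral {0..t} g - integral {0..s} g) \<le> B * \<bar>t - s\<bar>"
proof -
  have B0: "B \<ge> 0" using b[of 0] norm_ge_zero order_trans by blast
  have int: "\<And>a b. g integrable_on {a..b}"
    by (rule integrable_continuous_interval[OF continuous_on_subset[OF cg]]) auto
  have main: "norm (integral {0..t} g - integral {0..s} g) \<le> B * (t - s)" if st: "s \<le> t" for s t
  proof (cases "t < 0")
    case True
    then show ?thesis using st B0 by simp
  next
    case False
    show ?thesis
    proof (cases "s < 0")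
      case True
      have "norm (integral {0..t} g) \<le> B * (t - 0)"
        by (rule integral_bound) (use False b in \<open>auto intro: continuous_on_subset[OF cg]\<close>)
      also have "\<dots> \<le> B * (t - s)" using True B0 by (intro mult_left_mono) auto
      finally show ?thesis using True by simp
    next
      case False
      have "integral {0..s} g + integral {s..t} g = integral {0..t} g"
        by (rule Henstock_Kurzweil_Integration.integral_combine) (use False st int in auto)
      then have "integral {0..t} g - integral {0..s} g = integral {s..t} g" by (simp add: algebra_simps)
      moreover have "norm (integral {s..t} g) \<le> B * (t - s)"
        by (rule integral_bound) (use st b in \<open>auto intro: continuous_on_subset[OF cg]\<close>)
      ultimately show ?thesis by simp
    qed
  qed
  show ?thesis
  proof (cases "s \<le> t")
    case True then show ?thesis using main[OF True] by simp
  next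
    case False
    then have "norm (integral {0..s} g - integral {0..t} g) \<le> B * (s - t)" using main by simp
    then show ?thesis using False by (simp add: norm_minus_commute)
  qed
qed

lemma int_cont:
  fixes g :: "real \<Rightarrow> 'a::euclidean_space"
  assumes cg: "continuous_on UNIV g" and b: "\<And>s. norm (g s) \<le> B"
  shows "continuous_on UNIV (\<lambda>t. integral {0..t} g)"
proof -
  have B0: "B \<ge> 0" using b[of 0] norm_ge_zero order_trans by blast
  have "B-lipschitz_on UNIV (\<lambda>t. integral {0..t} g)"
    unfolding lipschitz_on_def using int_lip[OF cg b] B0 by (simp add: dist_norm)
  then show ?thesis by (rule lipschitz_on_continuous_on)
qed

lemma int_deriv:
  fixes g :: "real \<Rightarrow> 'a::euclidean_space"
  assumes cg: "continuous_on UNIV g" and t: "t \<ge> 0"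
  shows "((\<lambda>u. integral {0..u} g) has_vector_derivative g t) (at t within {0..})"
proof -
  have "((\<lambda>u. integral {0..u} g) has_vector_derivative g t) (at t within {0..t+1})"
    by (rule integral_has_vector_derivative[OF continuous_on_subset[OF cg]]) (use t in auto)
  moreover have "at t within {0..t+1} = at t within {0..}"
    by (rule at_within_nhd[where S="{t - 1 <..< t + 1}"]) auto
  ultimately show ?thesis by simp
qed

lemma exp_int:
  fixes a t :: real
  assumes a: "a > 0" and t: "t \<ge> 0"
  shows "((\<lambda>s. exp (a * s)) has_integral ((exp (a * t) - 1) / a)) {0..t}"
proof -
  have "((\<lambda>s. exp (a * s)) has_integral (exp (a * t) / a - exp (a * 0) / a)) {0..t}"
  proof (rule fundamental_theorem_of_calculus[OF t])
    fix x assume "x \<in> {0..t}"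
    have "((\<lambda>s. exp (a * s) / a) has_real_derivative (exp (a * x) * a / a)) (at x within {0..t})"
      by (auto intro!: derivative_eq_intros)
    then show "((\<lambda>s. exp (a * s) / a) has_vector_derivative exp (a * x)) (at x within {0..t})"
      using a by (simp add: has_real_derivative_iff_has_vector_derivative)
  qed
  then show ?thesis by (simp add: diff_divide_distrib)
qed

lemma t_exp_le: "a > 0 \<Longrightarrow> t \<ge> 0 \<Longrightarrow> exp (- a * t) * t \<le> 1 / a" for a t :: real
proof -
  assume a: "a > 0" and t: "t \<ge> 0"
  have "a * t \<le> exp (a * t)" using exp_ge_add_one_self[of "a * t"] by linarith
  then have "t \<le> exp (a * t) / a" using a by (simp add: field_simps)
  then have "exp (- a * t) * t \<le> exp (- a * t) * (exp (a * t) / a)" by (intro mult_left_mono) auto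
  also have "\<dots> = 1 / a" by (simp add: exp_minus field_simps)
  finally show ?thesis .
qed

theorem global_exist:
  fixes F :: "'a::euclidean_space \<Rightarrow> 'a" and y0 :: 'a
  assumes Lip: "\<And>p q. norm (F p - F q) \<le> Lc * norm (p - q)" and bnd: "\<And>p. norm (F p) \<le> B"
    and Lc: "Lc > 0"
  shows "\<exists>y. y 0 = y0 \<and> (\<forall>t\<ge>0. (y has_vector_derivative F (y t)) (at t within {0..}))"
proof -
  define a where "a = 2 * Lc"
  have a: "a > 0" using Lc by (simp add: a_def)
  have B0: "B \<ge> 0" using bnd[of 0] norm_ge_zero order_trans by blast
  have contF: "continuous_on UNIV F"
  proof -
    have "Lc-lipschitz_on UNIV F" unfolding lipschitz_on_def using Lip Lc by (simp add: dist_norm)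
    then show ?thesis by (rule lipschitz_on_continuous_on)
  qed
  define g where "g = (\<lambda>(z :: real \<Rightarrow>\<^sub>C 'a) s. F (exp (a * s) *\<^sub>R apply_bcontfun z s))"
  have cg: "\<And>z. continuous_on UNIV (g z)"
    unfolding g_def by (intro continuous_on_compose2[OF contF] continuous_intros) auto
  have bg: "\<And>z s. norm (g z s) \<le> B" unfolding g_def by (rule bnd)
  define \<Phi>f where "\<Phi>f = (\<lambda>z t. exp (- a * max 0 t) *\<^sub>R (y0 + integral {0..t} (g z)))"
  have Inorm: "\<And>z t. norm (integral {0..t} (g z)) \<le> B * max 0 t"
  proof -
    fix z t
    show "norm (integral {0..t} (g z)) \<le> B * max 0 t"
    proof (cases "t < 0")
      case True then show ?thesis using B0 by simp
    next
      case False
      then show ?thesis using int_lip[OF cg[of z] bg[of z], of t 0] by simp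
    qed
  qed
  have \<Phi>bc: "\<And>z. \<Phi>f z \<in> bcontfun"
  proof -
    fix z
    show "\<Phi>f z \<in> bcontfun"
    proof (rule bcontfun_normI)
      show "continuous_on UNIV (\<Phi>f z)"
        unfolding \<Phi>f_def by (intro continuous_intros int_cont[OF cg[of z] bg[of z]])
      fix t
      have e: "exp (- a * max 0 t) \<le> 1" using a by simp
      have "norm (\<Phi>f z t) = exp (- a * max 0 t) * norm (y0 + integral {0..t} (g z))"
        by (simp add: \<Phi>f_def)
      also have "\<dots> \<le> exp (- a * max 0 t) * (norm y0 + B * max 0 t)"
        by (intro mult_left_mono order.trans[OF norm_triangle_ineq]) (use Inorm[where z=z and t=t] in auto)
      also have "\<dots> = exp (- a * max 0 t) * norm y0 + B * (exp (- a * max 0 t) * max 0 t)"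
        by (simp add: algebra_simps)
      also have "\<dots> \<le> norm y0 + B * (1 / a)"
        using e t_exp_le[OF a, of "max 0 t"] B0
        by (intro add_mono mult_left_mono) (auto intro: mult_left_le_one_le)
      finally show "norm (\<Phi>f z t) \<le> norm y0 + B * (1 / a)" .
    qed
  qed
  define \<Phi> where "\<Phi> = (\<lambda>z. Bcontfun (\<Phi>f z))"
  have \<Phi>app: "\<And>z t. apply_bcontfun (\<Phi> z) t = \<Phi>f z t"
    unfolding \<Phi>_def using \<Phi>bc by (simp add: Bcontfun_inverse)
  have contr: "\<And>z w. dist (\<Phi> z) (\<Phi> w) \<le> (1/2) * dist z w"
  proof -
    fix z w :: "real \<Rightarrow>\<^sub>C 'a"
    define D where "D = dist z w"
    have D0: "D \<ge> 0" by (simp add: D_def)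
    show "dist (\<Phi> z) (\<Phi> w) \<le> (1/2) * dist z w"
    proof (rule dist_bound)
      fix t
      show "dist (apply_bcontfun (\<Phi> z) t) (apply_bcontfun (\<Phi> w) t) \<le> 1 / 2 * dist z w"
      proof (cases "t < 0")
        case True
        then show ?thesis by (simp add: \<Phi>app \<Phi>f_def)
      next
        case False
        then have t0: "t \<ge> 0" by simp
        have intz: "g z integrable_on {0..t}" and intw: "g w integrable_on {0..t}"
          by (rule integrable_continuous_interval[OF continuous_on_subset[OF cg]]; simp)+
        have inte: "(\<lambda>s. (Lc * D) * exp (a * s)) integrable_on {0..t}"
          by (rule integrable_continuous_interval) (intro continuous_intros)
        have pw: "\<And>s. norm (g z s - g w s) \<le> (Lc * D) * exp (a * s)"
        proof -
          fix s
          have "norm (g z s - g w s) \<le> Lc * norm (exp (a * s) *\<^sub>R apply_bcontfun z s - exp (a * s) *\<^sub>R apply_bcontfun w s)"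
            unfolding g_def by (rule Lip)
          also have "\<dots> = Lc * (exp (a * s) * dist (apply_bcontfun z s) (apply_bcontfun w s))"
            by (simp add: dist_norm scaleR_diff_right[symmetric])
          also have "\<dots> \<le> Lc * (exp (a * s) * D)"
            unfolding D_def using Lc by (intro mult_left_mono dist_bounded) auto
          finally show "norm (g z s - g w s) \<le> (Lc * D) * exp (a * s)" by (simp add: ac_simps)
        qed
        have "norm (integral {0..t} (g z) - integral {0..t} (g w)) = norm (integral {0..t} (\<lambda>s. g z s - g w s))"
          by (simp add: integral_diff[OF intz intw])
        also have "\<dots> \<le> integral {0..t} (\<lambda>s. (Lc * D) * exp (a * s))"
          by (rule integral_norm_bound_integral[OF integrable_diff[OF intz intw] inte pw])
        also have "\<dots> = (Lc * D) * ((exp (a * t) - 1) / a)"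
          using integral_unique[OF has_integral_mult_right[OF exp_int[OF a t0], of "Lc * D"]] by simp
        finally have ni: "norm (integral {0..t} (g z) - integral {0..t} (g w)) \<le> (Lc * D) * ((exp (a * t) - 1) / a)" .
        have "dist (\<Phi>f z t) (\<Phi>f w t) = exp (- a * t) * norm (integral {0..t} (g z) - integral {0..t} (g w))"
          using t0 by (simp add: \<Phi>f_def dist_norm scaleR_diff_right[symmetric])
        also have "\<dots> \<le> exp (- a * t) * ((Lc * D) * ((exp (a * t) - 1) / a))"
          by (intro mult_left_mono ni) auto
        also have "\<dots> = (Lc * D / a) * (1 - exp (- a * t))"
          using a by (simp add: field_simps exp_minus)
        also have "\<dots> \<le> (Lc * D / a) * 1"
          using a Lc D0 by (intro mult_left_mono) auto
        also have "\<dots> = 1/2 * D" using Lc by (simp add: a_def)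
        finally show ?thesis by (simp add: \<Phi>app D_def)
      qed
    qed
  qed
  obtain z where z: "\<Phi> z = z" using banach_fix_type[of "1/2" \<Phi>] contr by auto
  define y where "y = (\<lambda>t. exp (a * max 0 t) *\<^sub>R apply_bcontfun z t)"
  have yeq: "\<And>t. t \<ge> 0 \<Longrightarrow> y t = y0 + integral {0..t} (g z)"
  proof -
    fix t :: real assume t: "t \<ge> 0"
    have "apply_bcontfun z t = \<Phi>f z t" using \<Phi>app[of z t] z by simp
    then show "y t = y0 + integral {0..t} (g z)"
      using t by (simp add: y_def \<Phi>f_def exp_minus)
  qed
  have gy: "\<And>s. s \<ge> 0 \<Longrightarrow> g z s = F (y s)" by (simp add: g_def y_def)
  show ?thesis
  proof (intro exI conjI allI impI)
    show "y 0 = y0" using yeq[of 0] by simp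
    fix t :: real assume t: "t \<ge> 0"
    have "((\<lambda>u. y0 + integral {0..u} (g z)) has_vector_derivative g z t) (at t within {0..})"
      using has_vector_derivative_add[OF has_vector_derivative_const int_deriv[OF cg[of z] t]] by simp
    then have "(y has_vector_derivative g z t) (at t within {0..})"
      by (rule has_vector_derivative_transform[rotated 2]) (use t yeq in auto)
    then show "(y has_vector_derivative F (y t)) (at t within {0..})" using gy[OF t] by simp
  qed
qed


lemma infdist_lt_ex:
  assumes "A \<noteq> {}" "infdist p A < e"
  shows "\<exists>q\<in>A. dist p q < e"
proof -
  have "(INF a\<in>A. dist p a) < e" using assms by (simp add: infdist_notempty)
  moreover have "bdd_below ((\<lambda>a. dist p a) ` A)" by (intro bdd_belowI[of _ 0]) auto
  ultimately show ?thesis using cINF_less_iff[OF assms(1), of "\<lambda>a. dist p a" e] by simp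
qed

lemma hvd_fst: "(y has_vector_derivative (a, b)) F \<Longrightarrow> ((\<lambda>t. fst (y t)) has_vector_derivative a) F"
  using bounded_linear.has_vector_derivative[OF bounded_linear_fst, of y "(a, b)" F] by simp
lemma hvd_snd: "(y has_vector_derivative (a, b)) F \<Longrightarrow> ((\<lambda>t. snd (y t)) has_vector_derivative b) F"
  using bounded_linear.has_vector_derivative[OF bounded_linear_snd, of y "(a, b)" F] by simp

context kep begin

lemma exist_sol:
  assumes y0: "y0 \<noteq> 0" and V0: "lyapV \<mu> k1 k2 L0 A0 y0 w0 \<le> c"
  shows "\<exists>x v. ctrl_sol \<mu> k1 k2 L0 A0 {0..} x v \<and> x 0 = y0 \<and> v 0 = w0"
proof -
  define \<rho> where "\<rho> = r0 / 2"
  define R where "R = max Rx Rv + \<rho>"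
  have rho: "\<rho> > 0" using r0_pos by (simp add: \<rho>_def)
  have R0: "R \<ge> 0" using Rv_pos rho by (simp add: R_def)
  define F where "F = FG \<mu> k1 k2 L0 A0 \<rho> R"
  have "BL F" unfolding F_def by (rule FG_BL[OF rho R0])
  then obtain B L where BL: "L \<ge> 0" "\<And>p. norm (F p) \<le> B" "\<And>p q. norm (F p - F q) \<le> L * dist p q"
    by (metis BLE)
  have Lip: "\<And>p q. norm (F p - F q) \<le> (L + 1) * norm (p - q)"
  proof -
    fix p q :: "vec3 \<times> vec3"
    have "L * dist p q \<le> (L + 1) * norm (p - q)" by (simp add: dist_norm mult_right_mono)
    then show "norm (F p - F q) \<le> (L + 1) * norm (p - q)" using BL(3)[of p q] by linarith
  qed
  obtain y where y: "y 0 = (y0, w0)" "\<And>t. t \<ge> 0 \<Longrightarrow> (y has_vector_derivative F (y t)) (at t within {0..})"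
    using global_exist[OF Lip BL(2), of "(y0, w0)"] BL(1) by auto
  have K0: "(y0, w0) \<in> Kset" using y0 V0 by (simp add: Kset_def)
  define U where "U = {p. infdist p Kset < \<rho>}"
  have KU: "Kset \<subseteq> U" using rho by (auto simp: U_def)
  have Ureg: "\<And>p. p \<in> U \<Longrightarrow> \<rho> \<le> norm (fst p) \<and> norm (fst p) \<le> R \<and> norm (snd p) \<le> R"
  proof -
    fix p assume "p \<in> U"
    then have "infdist p Kset < \<rho>" by (simp add: U_def)
    moreover have "Kset \<noteq> {}" using K0 by blast
    ultimately have "\<exists>q\<in>Kset. dist p q < \<rho>" using infdist_lt_ex by blast
    then obtain q where q: "q \<in> Kset" "dist p q < \<rho>" by blast
    have b: "r0 \<le> norm (fst q)" "norm (fst q) \<le> Rx" "norm (snd q) \<le> Rv"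
      using K_bounds[of "fst q" "snd q"] q(1) by (auto simp: Kset_def)
    have d1: "norm (fst p - fst q) < \<rho>" using dist_fst_le[of p q] q(2) by (simp add: dist_norm)
    have d2: "norm (snd p - snd q) < \<rho>" using dist_snd_le[of p q] q(2) by (simp add: dist_norm)
    have "norm (fst q) \<le> norm (fst p) + norm (fst p - fst q)"
      using norm_triangle_sub[of "fst q" "fst p"] by (simp add: norm_minus_commute)
    moreover have "norm (fst p) \<le> norm (fst q) + norm (fst p - fst q)" by (rule norm_triangle_sub)
    moreover have "norm (snd p) \<le> norm (snd q) + norm (snd p - snd q)" by (rule norm_triangle_sub)
    moreover have "Rx \<le> max Rx Rv" "Rv \<le> max Rx Rv" by auto
    ultimately show "\<rho> \<le> norm (fst p) \<and> norm (fst p) \<le> R \<and> norm (snd p) \<le> R"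
      using b d1 d2 unfolding R_def \<rho>_def by linarith
  qed
  have FU: "\<And>p. p \<in> U \<Longrightarrow> F p = fF \<mu> k1 k2 L0 A0 p \<and> fst p \<noteq> 0"
  proof -
    fix p assume "p \<in> U"
    from Ureg[OF this] have "\<rho> \<le> norm (fst p)" "norm (fst p) \<le> R" "norm (snd p) \<le> R" by auto
    then show "F p = fF \<mu> k1 k2 L0 A0 p \<and> fst p \<noteq> 0" unfolding F_def using rho
      by (auto intro: FG_eq)
  qed
  have ycont: "continuous_on {0..} y"
    by (rule continuous_on_vector_derivative) (use y(2) in auto)
  have solI: "\<And>I. I \<subseteq> {0..} \<Longrightarrow> (\<forall>t\<in>I. y t \<in> U) \<Longrightarrow>
      ctrl_sol \<mu> k1 k2 L0 A0 I (\<lambda>t. fst (y t)) (\<lambda>t. snd (y t))"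
  proof -
    fix I :: "real set" assume I: "I \<subseteq> {0..}" and yU: "\<forall>t\<in>I. y t \<in> U"
    show "ctrl_sol \<mu> k1 k2 L0 A0 I (\<lambda>t. fst (y t)) (\<lambda>t. snd (y t))"
      unfolding ctrl_sol_def
    proof
      fix t assume t: "t \<in> I"
      then have t0: "t \<ge> 0" using I by auto
      have e: "F (y t) = fF \<mu> k1 k2 L0 A0 (y t)" "fst (y t) \<noteq> 0" using FU yU t by auto
      have d: "(y has_vector_derivative fF \<mu> k1 k2 L0 A0 (y t)) (at t within I)"
        using has_vector_derivative_within_subset[OF y(2)[OF t0] I] e by simp
      show "fst (y t) \<noteq> 0 \<and>
         ((\<lambda>t. fst (y t)) has_vector_derivative ctrl_x \<mu> k1 k2 L0 A0 (fst (y t)) (snd (y t))) (at t within I) \<and>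
         ((\<lambda>t. snd (y t)) has_vector_derivative ctrl_v \<mu> k1 k2 L0 A0 (fst (y t)) (snd (y t))) (at t within I)"
        using e(2) hvd_fst[OF d[unfolded fF_def]] hvd_snd[OF d[unfolded fF_def]] by simp
    qed
  qed
  define A where "A = {t. t \<ge> 0 \<and> y t \<notin> U}"
  have "A = {}"
  proof (rule ccontr)
    assume ne: "A \<noteq> {}"
    have Uo: "open U" unfolding U_def by (intro open_Collect_less continuous_intros)
    have "closed ({0..} \<inter> y -` (- U))"
      by (rule continuous_closed_preimage[OF ycont]) (use Uo in auto)
    moreover have "A = {0..} \<inter> y -` (- U)" by (auto simp: A_def)
    ultimately have Acl: "closed A" by simp
    have bdd: "bdd_below A" by (rule bdd_belowI[of _ 0]) (auto simp: A_def)
    define ts where "ts = Inf A"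
    have tsA: "ts \<in> A" unfolding ts_def by (rule closed_contains_Inf[OF ne bdd Acl])
    then have ts0: "ts \<ge> 0" and tsU: "y ts \<notin> U" by (auto simp: A_def)
    have before: "\<And>t. 0 \<le> t \<Longrightarrow> t < ts \<Longrightarrow> y t \<in> U"
    proof (rule ccontr)
      fix t assume "0 \<le> t" "t < ts" "y t \<notin> U"
      then have "t \<in> A" by (simp add: A_def)
      then have "ts \<le> t" unfolding ts_def by (rule cInf_lower[OF _ bdd])
      then show False using \<open>t < ts\<close> by simp
    qed
    have tspos: "ts > 0"
    proof (rule ccontr)
      assume "\<not> ts > 0"
      then have "ts = 0" using ts0 by simp
      then show False using tsU y(1) K0 KU by auto
    qed
    have sol: "ctrl_sol \<mu> k1 k2 L0 A0 {0..<ts} (\<lambda>t. fst (y t)) (\<lambda>t. snd (y t))"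
      by (rule solI) (use before in auto)
    have inK: "\<And>t. t \<in> {0..<ts} \<Longrightarrow> y t \<in> Kset"
    proof -
      fix t assume t: "t \<in> {0..<ts}"
      have "(fst (y t), snd (y t)) \<in> Kset"
        by (rule sol_in_K[OF _ _ _ sol _ t]) (use tspos y(1) V0 in \<open>auto simp: is_interval_ic\<close>)
      then show "y t \<in> Kset" by simp
    qed
    have "y ` closure {0..<ts} \<subseteq> Kset"
      by (rule image_closure_subset) (use tspos inK Kset_closed in \<open>auto intro: continuous_on_subset[OF ycont]\<close>)
    then have "y ts \<in> Kset" using tspos by auto
    then show False using tsU KU by auto
  qed
  then have allU: "\<forall>t\<in>{0..}. y t \<in> U" by (auto simp: A_def)
  have "ctrl_sol \<mu> k1 k2 L0 A0 {0..} (\<lambda>t. fst (y t)) (\<lambda>t. snd (y t))"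
    by (rule solI[OF _ allU]) simp
  then show ?thesis using y(1) by (intro exI[of _ "\<lambda>t. fst (y t)"] exI[of _ "\<lambda>t. snd (y t)"]) simp
qed

end


theorem theorem6:
  fixes \<mu> k1 k2 c :: real and x0 v0 :: vec3
  assumes "\<mu> > 0" and "k1 > 0" and "k2 > 0"
    and "x0 \<noteq> 0"
    and "angmom x0 v0 \<noteq> 0"
    and "norm (lrl \<mu> x0 v0) < \<mu>"
    and "0 < c"
    and "c < min (k1 * (norm (angmom x0 v0))\<^sup>2 / 2) (k2 * (\<mu> - norm (lrl \<mu> x0 v0))\<^sup>2 / 2)"
  shows
    \<comment> \<open>every trajectory starting in V^{-1}([0,c]) exists for all t \<ge> 0\<close>
    "(\<forall>y0 w0. y0 \<noteq> 0 \<and> lyapV \<mu> k1 k2 (angmom x0 v0) (lrl \<mu> x0 v0) y0 w0 \<le> c \<longrightarrow>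
        (\<exists>x v. ctrl_sol \<mu> k1 k2 (angmom x0 v0) (lrl \<mu> x0 v0) {0..} x v \<and> x 0 = y0 \<and> v 0 = w0))
   \<and> \<comment> \<open>it stays in V^{-1}([0,c]) and converges to V^{-1}(0)\<close>
    (\<forall>I x v. is_interval I \<and> 0 \<in> I \<and> I \<subseteq> {0..}
        \<and> ctrl_sol \<mu> k1 k2 (angmom x0 v0) (lrl \<mu> x0 v0) I x v
        \<and> lyapV \<mu> k1 k2 (angmom x0 v0) (lrl \<mu> x0 v0) (x 0) (v 0) \<le> c \<longrightarrow>
        (\<forall>t\<in>I. lyapV \<mu> k1 k2 (angmom x0 v0) (lrl \<mu> x0 v0) (x t) (v t) \<le> c)
        \<and> (I = {0..} \<longrightarrow>
             ((\<lambda>t. infdist (x t, v t) (target_set \<mu> (angmom x0 v0) (lrl \<mu> x0 v0))) \<longlongrightarrow> 0) at_top))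
   \<and> \<comment> \<open>V^{-1}(0) is forward invariant under the controlled system\<close>
    (\<forall>I x v. is_interval I \<and> 0 \<in> I \<and> I \<subseteq> {0..}
        \<and> ctrl_sol \<mu> k1 k2 (angmom x0 v0) (lrl \<mu> x0 v0) I x v
        \<and> (x 0, v 0) \<in> target_set \<mu> (angmom x0 v0) (lrl \<mu> x0 v0) \<longrightarrow>
        (\<forall>t\<in>I. (x t, v t) \<in> target_set \<mu> (angmom x0 v0) (lrl \<mu> x0 v0)))
   \<and> \<comment> \<open>V^{-1}(0) is forward invariant under the Kepler system\<close>
    (\<forall>I x v. is_interval I \<and> 0 \<in> I \<and> I \<subseteq> {0..}
        \<and> kepler_sol \<mu> I x v
        \<and> (x 0, v 0) \<in> target_set \<mu> (angmom x0 v0) (lrl \<mu> x0 v0) \<longrightarrow>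
        (\<forall>t\<in>I. (x t, v t) \<in> target_set \<mu> (angmom x0 v0) (lrl \<mu> x0 v0)))"
proof -
  define L0 where "L0 = angmom x0 v0"
  define A0 where "A0 = lrl \<mu> x0 v0"
  have m: "c < k1 * (norm L0)\<^sup>2 / 2" "c < k2 * (\<mu> - norm A0)\<^sup>2 / 2"
    using assms(8) by (simp_all add: L0_def A0_def)
  interpret K: kep \<mu> k1 k2 c L0 A0
    by unfold_locales (use assms m angmom_lrl_perp in \<open>auto simp: L0_def A0_def\<close>)
  have P1: "\<forall>y0 w0. y0 \<noteq> 0 \<and> lyapV \<mu> k1 k2 L0 A0 y0 w0 \<le> c \<longrightarrow>
        (\<exists>x v. ctrl_sol \<mu> k1 k2 L0 A0 {0..} x v \<and> x 0 = y0 \<and> v 0 = w0)"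
    using K.exist_sol by blast
  have P2: "\<forall>I x v. is_interval I \<and> 0 \<in> I \<and> I \<subseteq> {0..}
        \<and> ctrl_sol \<mu> k1 k2 L0 A0 I x v
        \<and> lyapV \<mu> k1 k2 L0 A0 (x 0) (v 0) \<le> c \<longrightarrow>
        (\<forall>t\<in>I. lyapV \<mu> k1 k2 L0 A0 (x t) (v t) \<le> c)
        \<and> (I = {0..} \<longrightarrow>
             ((\<lambda>t. infdist (x t, v t) (target_set \<mu> L0 A0)) \<longlongrightarrow> 0) at_top)"
  proof (intro allI impI conjI ballI)
    fix I x v t
    assume h: "is_interval I \<and> 0 \<in> I \<and> I \<subseteq> {0..} \<and> ctrl_sol \<mu> k1 k2 L0 A0 I x v
        \<and> lyapV \<mu> k1 k2 L0 A0 (x 0) (v 0) \<le> c" and t: "t \<in> I"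
    have "lyapV \<mu> k1 k2 L0 A0 (x t) (v t) \<le> lyapV \<mu> k1 k2 L0 A0 (x 0) (v 0)"
      using ctrl_V_decr[of I \<mu> k1 k2 L0 A0 x v 0 t] h t by auto
    then show "lyapV \<mu> k1 k2 L0 A0 (x t) (v t) \<le> c" using h by linarith
  next
    fix I x v
    assume h: "is_interval I \<and> 0 \<in> I \<and> I \<subseteq> {0..} \<and> ctrl_sol \<mu> k1 k2 L0 A0 I x v
        \<and> lyapV \<mu> k1 k2 L0 A0 (x 0) (v 0) \<le> c" and I: "I = {0..}"
    show "((\<lambda>t. infdist (x t, v t) (target_set \<mu> L0 A0)) \<longlongrightarrow> 0) at_top"
      using K.converge[of x v] h I by simp
  qed
  have P3: "\<forall>I x v. is_interval I \<and> 0 \<in> I \<and> I \<subseteq> {0..}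
        \<and> ctrl_sol \<mu> k1 k2 L0 A0 I x v
        \<and> (x 0, v 0) \<in> target_set \<mu> L0 A0 \<longrightarrow>
        (\<forall>t\<in>I. (x t, v t) \<in> target_set \<mu> L0 A0)"
    using part3[OF assms(2,3)] by blast
  have P4: "\<forall>I x v. is_interval I \<and> 0 \<in> I \<and> I \<subseteq> {0..}
        \<and> kepler_sol \<mu> I x v
        \<and> (x 0, v 0) \<in> target_set \<mu> L0 A0 \<longrightarrow>
        (\<forall>t\<in>I. (x t, v t) \<in> target_set \<mu> L0 A0)"
    using part4 by blast
  show ?thesis using P1 P2 P3 P4 unfolding L0_def A0_def by blast
qed


end
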